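(* Let $D$ be a directed graph and $(V(D),\mathcal C)$ its corresponding connectoid. Then the end space of $D$ is homeomorphic to the end space of $(V(D),\mathcal C)$.
   Context: A connectoid is given by a set $S$ and a set $\mathcal F$ of finite subsets of $S$ such that (i) $F\cup F'\in\mathcal F$ whenever $F,F'\in\mathcal F$ and $F\cap F'\neq\emptyset$, and (ii) $\emptyset\in\mathcal F$ and $\{s\}\in\mathcal F$ for every $s\in S$. A set $C\subseteq S$ is connected if for all $x,y\in C$ there is $F\in\mathcal F$ with $F\subseteq C$ and $x,y\in F$. For $S'\subseteq S$, $\mathcal K(S')$ is the set of maximal connected subsets (components) of $S'$. The corresponding connectoid of a directed graph $D$ has $S=V(D)$ and $\mathcal F$ the set of vertex sets of finite strongly connected subgraphs of $D$; its connected sets are exactly the vertex sets of strongly connected subgraphs of $D$. A necklace is a connected set $N$ for which there is a family $(H_n)_{n\in\mathbb N}$ of finite connected sets with $N=\bigcup_n H_n$ and $H_i\cap H_j\neq\emptyset$ iff $|i-j|\le 1$. For finite $X\subseteq S$, the $X$-tail of $N$ is the unique element of $\mathcal K(N\setminus X)$ containing all but finitely many elements of $N$. Two necklaces are equivalent if for every finite $X$ their $X$-tails lie in the same element of $\mathcal K(S\setminus X)$; ends of the connectoid are the equivalence classes; $K(X,\omega)$ is the element of $\mathcal K(S\setminus X)$ containing the $X$-tails of the necklaces of $\omega$; the end space has the topology generated by the sets $\{\omega:K(X,\omega)=K\}$ for finite $X$ and $K\in\mathcal K(S\setminus X)$. Ends of a directed graph $D$ (Bürger–Melcher): a directed ray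 is a ray with all edges oriented away from its first vertex. A directed ray $R$ is solid if for every finite $A\subseteq V(D)$ it has a tail in some strong component of $D-A$. Two solid rays are equivalent if for every finite $A\subseteq V(D)$ they have tails in the same strong component of $D-A$; the equivalence classes are the ends of $D$, and $K(A,\omega)$ is that strong component. The end space of $D$ carries the topology generated by the sets $\{\omega: K(A,\omega)=K\}$ for finite $A\subseteq V(D)$ and strong components $K$ of $D-A$. *)

theory Defs
  imports "HOL-Analysis.Analysis"
begin

definition connectoid :: "'a set \<Rightarrow> 'a set set \<Rightarrow> bool" where
  "connectoid S F \<longleftrightarrow>
     (\<forall>X\<in>F. finite X \<and> X \<subseteq> S) \<and>
     (\<forall>X\<in>F. \<forall>Y\<in>F. X \<inter> Y \<noteq> {} \<longrightarrow> X \<union> Y \<in> F) \<and>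
     {} \<in> F \<and> (\<forall>s\<in>S. {s} \<in> F)"

definition cn_connected :: "'a set \<Rightarrow> 'a set set \<Rightarrow> 'a set \<Rightarrow> bool" where
  "cn_connected S F C \<longleftrightarrow> C \<subseteq> S \<and>
     (\<forall>x\<in>C. \<forall>y\<in>C. \<exists>X\<in>F. X \<subseteq> C \<and> x \<in> X \<and> y \<in> X)"

definition cn_components :: "'a set \<Rightarrow> 'a set set \<Rightarrow> 'a set \<Rightarrow> 'a set set" where
  "cn_components S F S' = {C. C \<subseteq> S' \<and> cn_connected S F C \<and>
       (\<forall>C'. C \<subseteq> C' \<and> C' \<subseteq> S' \<and> cn_connected S F C' \<longrightarrow> C' = C)}"

definition necklace :: "'a set \<Rightarrow> 'a set set \<Rightarrow> 'a set \<Rightarrow> bool" where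
  "necklace S F N \<longleftrightarrow> cn_connected S F N \<and>
     (\<exists>H :: nat \<Rightarrow> 'a set.
        (\<forall>n. finite (H n) \<and> cn_connected S F (H n)) \<and>
        N = (\<Union>n. H n) \<and>
        (\<forall>i j. H i \<inter> H j \<noteq> {} \<longleftrightarrow> i \<le> j + 1 \<and> j \<le> i + 1))"

definition necklace_tail :: "'a set \<Rightarrow> 'a set set \<Rightarrow> 'a set \<Rightarrow> 'a set \<Rightarrow> 'a set" where
  "necklace_tail S F N X =
     (THE T. T \<in> cn_components S F (N - X) \<and> finite (N - T))"

definition necklace_equiv :: "'a set \<Rightarrow> 'a set set \<Rightarrow> 'a set \<Rightarrow> 'a set \<Rightarrow> bool" where
  "necklace_equiv S F N N' \<longleftrightarrow>
     (\<forall>X. finite X \<and> X \<subseteq> S \<longrightarrow>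
        (\<exists>K\<in>cn_components S F (S - X).
           necklace_tail S F N X \<subseteq> K \<and> necklace_tail S F N' X \<subseteq> K))"

definition cn_ends :: "'a set \<Rightarrow> 'a set set \<Rightarrow> 'a set set set" where
  "cn_ends S F = {{N'. necklace S F N' \<and> necklace_equiv S F N N'} | N. necklace S F N}"

definition cn_end_comp :: "'a set \<Rightarrow> 'a set set \<Rightarrow> 'a set \<Rightarrow> 'a set set \<Rightarrow> 'a set" where
  "cn_end_comp S F X \<omega> =
     (THE K. K \<in> cn_components S F (S - X) \<and> (\<forall>N\<in>\<omega>. necklace_tail S F N X \<subseteq> K))"

definition cn_end_space :: "'a set \<Rightarrow> 'a set set \<Rightarrow> 'a set set topology" where
  "cn_end_space S F =
     subtopology
       (topology_generated_by
          {{\<omega> \<in> cn_ends S F. cn_end_comp S F X \<omega> = K} | X K.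
             finite X \<and> X \<subseteq> S \<and> K \<in> cn_components S F (S - X)})
       (cn_ends S F)"

text \<open>A directed graph D is given by a vertex set V and an edge relation E \<subseteq> V \<times> V
(parallel edges are irrelevant for strong connectivity and rays).\<close>

definition strongly_connected_set :: "'a set \<Rightarrow> ('a \<times> 'a) set \<Rightarrow> 'a set \<Rightarrow> bool" where
  "strongly_connected_set V E C \<longleftrightarrow> C \<subseteq> V \<and>
     (\<forall>x\<in>C. \<forall>y\<in>C. (x, y) \<in> (E \<inter> (C \<times> C))\<^sup>*)"

definition strong_components :: "'a set \<Rightarrow> ('a \<times> 'a) set \<Rightarrow> 'a set \<Rightarrow> 'a set set" where
  "strong_components V E A = {K. K \<subseteq> V - A \<and> K \<noteq> {} \<and> strongly_connected_set V E K \<and>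
       (\<forall>K'. K \<subseteq> K' \<and> K' \<subseteq> V - A \<and> strongly_connected_set V E K' \<longrightarrow> K' = K)}"

definition digraph_connectoid_family :: "'a set \<Rightarrow> ('a \<times> 'a) set \<Rightarrow> 'a set set" where
  "digraph_connectoid_family V E = {C. finite C \<and> strongly_connected_set V E C}"

definition directed_ray :: "'a set \<Rightarrow> ('a \<times> 'a) set \<Rightarrow> (nat \<Rightarrow> 'a) \<Rightarrow> bool" where
  "directed_ray V E r \<longleftrightarrow> inj r \<and> (\<forall>n. r n \<in> V) \<and> (\<forall>n. (r n, r (Suc n)) \<in> E)"

definition tail_in :: "(nat \<Rightarrow> 'a) \<Rightarrow> 'a set \<Rightarrow> bool" where
  "tail_in r K \<longleftrightarrow> (\<exists>n. \<forall>m\<ge>n. r m \<in> K)"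

definition solid_ray :: "'a set \<Rightarrow> ('a \<times> 'a) set \<Rightarrow> (nat \<Rightarrow> 'a) \<Rightarrow> bool" where
  "solid_ray V E r \<longleftrightarrow> directed_ray V E r \<and>
     (\<forall>A. finite A \<and> A \<subseteq> V \<longrightarrow> (\<exists>K\<in>strong_components V E A. tail_in r K))"

definition ray_equiv :: "'a set \<Rightarrow> ('a \<times> 'a) set \<Rightarrow> (nat \<Rightarrow> 'a) \<Rightarrow> (nat \<Rightarrow> 'a) \<Rightarrow> bool" where
  "ray_equiv V E r s \<longleftrightarrow>
     (\<forall>A. finite A \<and> A \<subseteq> V \<longrightarrow> (\<exists>K\<in>strong_components V E A. tail_in r K \<and> tail_in s K))"

definition dg_ends :: "'a set \<Rightarrow> ('a \<times> 'a) set \<Rightarrow> (nat \<Rightarrow> 'a) set set" where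
  "dg_ends V E = {{s. solid_ray V E s \<and> ray_equiv V E r s} | r. solid_ray V E r}"

definition dg_end_comp :: "'a set \<Rightarrow> ('a \<times> 'a) set \<Rightarrow> 'a set \<Rightarrow> (nat \<Rightarrow> 'a) set \<Rightarrow> 'a set" where
  "dg_end_comp V E A \<omega> = (THE K. K \<in> strong_components V E A \<and> (\<forall>r\<in>\<omega>. tail_in r K))"

definition dg_end_space :: "'a set \<Rightarrow> ('a \<times> 'a) set \<Rightarrow> (nat \<Rightarrow> 'a) set topology" where
  "dg_end_space V E =
     subtopology
       (topology_generated_by
          {{\<omega> \<in> dg_ends V E. dg_end_comp V E A \<omega> = K} | A K.
             finite A \<and> A \<subseteq> V \<and> K \<in> strong_components V E A})
       (dg_ends V E)"

end

theory Submission
  imports Defs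
begin

lemma rt_mono_sub: "W1 \<subseteq> W \<Longrightarrow> (x,y) \<in> (E \<inter> W1 \<times> W1)\<^sup>* \<Longrightarrow> (x,y) \<in> (E \<inter> W \<times> W)\<^sup>*"
proof -
  assume a: "W1 \<subseteq> W" "(x,y) \<in> (E \<inter> W1 \<times> W1)\<^sup>*"
  have "E \<inter> W1 \<times> W1 \<subseteq> E \<inter> W \<times> W" using a(1) by auto
  then show ?thesis using a(2) rtrancl_mono by blast
qed

lemma scs_union:
  assumes "strongly_connected_set V E C1" "strongly_connected_set V E C2" "C1 \<inter> C2 \<noteq> {}"
  shows "strongly_connected_set V E (C1 \<union> C2)"
proof -
  obtain z where z: "z \<in> C1" "z \<in> C2" using assms(3) by blast
  have p1: "(x,y) \<in> (E \<inter> (C1 \<union> C2) \<times> (C1 \<union> C2))\<^sup>*" if "x \<in> C1" "y \<in> C1" for x y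
    using assms(1) that rt_mono_sub[of C1 "C1 \<union> C2"] unfolding strongly_connected_set_def by blast
  have p2: "(x,y) \<in> (E \<inter> (C1 \<union> C2) \<times> (C1 \<union> C2))\<^sup>*" if "x \<in> C2" "y \<in> C2" for x y
    using assms(2) that rt_mono_sub[of C2 "C1 \<union> C2"] unfolding strongly_connected_set_def by blast
  show ?thesis unfolding strongly_connected_set_def
  proof (intro conjI ballI)
    show "C1 \<union> C2 \<subseteq> V" using assms unfolding strongly_connected_set_def by auto
  next
    fix x y assume xy: "x \<in> C1 \<union> C2" "y \<in> C1 \<union> C2"
    have "(x,z) \<in> (E \<inter> (C1 \<union> C2) \<times> (C1 \<union> C2))\<^sup>*" using xy p1 p2 z by blast
    moreover have "(z,y) \<in> (E \<inter> (C1 \<union> C2) \<times> (C1 \<union> C2))\<^sup>*" using xy p1 p2 z by blast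
    ultimately show "(x,y) \<in> (E \<inter> (C1 \<union> C2) \<times> (C1 \<union> C2))\<^sup>*" by (rule rtrancl_trans)
  qed
qed

lemma fin_path_set:
  assumes "(x,y) \<in> (E \<inter> C \<times> C)\<^sup>*" "x \<in> C"
  shows "\<exists>W. finite W \<and> W \<subseteq> C \<and> x \<in> W \<and> y \<in> W \<and>
     (\<forall>z\<in>W. (x,z) \<in> (E \<inter> W \<times> W)\<^sup>* \<and> (z,y) \<in> (E \<inter> W \<times> W)\<^sup>*)"
  using assms(1)
proof (induction rule: rtrancl_induct)
  case base
  then show ?case using assms(2) by (intro exI[of _ "{x}"]) auto
next
  case (step y z)
  then obtain W where W: "finite W" "W \<subseteq> C" "x \<in> W" "y \<in> W"
     "\<forall>u\<in>W. (x,u) \<in> (E \<inter> W \<times> W)\<^sup>* \<and> (u,y) \<in> (E \<inter> W \<times> W)\<^sup>*" by blast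
  let ?W = "insert z W"
  have sub: "W \<subseteq> ?W" by auto
  have e: "(y,z) \<in> E \<inter> ?W \<times> ?W" using step(2) W(4) by blast
  have yz: "(y,z) \<in> (E \<inter> ?W \<times> ?W)\<^sup>*" using e by blast
  have xy: "(x,y) \<in> (E \<inter> ?W \<times> ?W)\<^sup>*" using W(4,5) rt_mono_sub[OF sub] by blast
  have xz: "(x,z) \<in> (E \<inter> ?W \<times> ?W)\<^sup>*" using xy yz by (rule rtrancl_trans)
  have A: "(x,u) \<in> (E \<inter> ?W \<times> ?W)\<^sup>* \<and> (u,z) \<in> (E \<inter> ?W \<times> ?W)\<^sup>*" if u: "u \<in> ?W" for u
  proof (cases "u = z")
    case True
    then show ?thesis using xz by simp
  next
    case False
    then have uW: "u \<in> W" using u by simp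
    have "(x,u) \<in> (E \<inter> ?W \<times> ?W)\<^sup>*" using W(5) uW rt_mono_sub[OF sub] by blast
    moreover have "(u,y) \<in> (E \<inter> ?W \<times> ?W)\<^sup>*" using W(5) uW rt_mono_sub[OF sub] by blast
    then have "(u,z) \<in> (E \<inter> ?W \<times> ?W)\<^sup>*" using yz by (rule rtrancl_trans)
    ultimately show ?thesis by simp
  qed
  show ?case
    apply (rule exI[of _ ?W])
    using W step(2) A by auto
qed

lemma scs_fin:
  assumes "strongly_connected_set V E C" "x \<in> C" "y \<in> C"
  shows "\<exists>W. finite W \<and> strongly_connected_set V E W \<and> W \<subseteq> C \<and> x \<in> W \<and> y \<in> W"
proof -
  have CV: "C \<subseteq> V" and pc: "\<And>a b. a \<in> C \<Longrightarrow> b \<in> C \<Longrightarrow> (a,b) \<in> (E \<inter> C \<times> C)\<^sup>*"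
    using assms(1) unfolding strongly_connected_set_def by auto
  obtain W1 where W1: "finite W1" "W1 \<subseteq> C" "x \<in> W1" "y \<in> W1"
     "\<forall>z\<in>W1. (x,z) \<in> (E \<inter> W1 \<times> W1)\<^sup>* \<and> (z,y) \<in> (E \<inter> W1 \<times> W1)\<^sup>*"
    using fin_path_set[OF pc[OF assms(2,3)] assms(2)] by blast
  obtain W2 where W2: "finite W2" "W2 \<subseteq> C" "y \<in> W2" "x \<in> W2"
     "\<forall>z\<in>W2. (y,z) \<in> (E \<inter> W2 \<times> W2)\<^sup>* \<and> (z,x) \<in> (E \<inter> W2 \<times> W2)\<^sup>*"
    using fin_path_set[OF pc[OF assms(3,2)] assms(3)] by blast
  define W where "W = W1 \<union> W2"
  have s1: "W1 \<subseteq> W" and s2: "W2 \<subseteq> W" unfolding W_def by auto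
  note m1 = rt_mono_sub[OF s1] and m2 = rt_mono_sub[OF s2]
  have xy: "(x,y) \<in> (E \<inter> W \<times> W)\<^sup>*" using W1(3,5) m1 by blast
  have yx: "(y,x) \<in> (E \<inter> W \<times> W)\<^sup>*" using W2(3,5) m2 by blast
  have to: "(a,x) \<in> (E \<inter> W \<times> W)\<^sup>* \<and> (x,a) \<in> (E \<inter> W \<times> W)\<^sup>*" if "a \<in> W" for a
  proof (cases "a \<in> W1")
    case True
    have "(x,a) \<in> (E \<inter> W \<times> W)\<^sup>*" using W1(5) True m1 by blast
    moreover have "(a,y) \<in> (E \<inter> W \<times> W)\<^sup>*" using W1(5) True m1 by blast
    then have "(a,x) \<in> (E \<inter> W \<times> W)\<^sup>*" using yx by (rule rtrancl_trans)
    ultimately show ?thesis by simp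
  next
    case False
    then have a2: "a \<in> W2" using that unfolding W_def by auto
    have "(a,x) \<in> (E \<inter> W \<times> W)\<^sup>*" using W2(5) a2 m2 by blast
    moreover have "(y,a) \<in> (E \<inter> W \<times> W)\<^sup>*" using W2(5) a2 m2 by blast
    then have "(x,a) \<in> (E \<inter> W \<times> W)\<^sup>*" using xy rtrancl_trans by metis
    ultimately show ?thesis by simp
  qed
  have "strongly_connected_set V E W"
    unfolding strongly_connected_set_def
  proof (intro conjI ballI)
    show "W \<subseteq> V" using W1(2) W2(2) CV unfolding W_def by auto
    fix a b assume "a \<in> W" "b \<in> W"
    then show "(a,b) \<in> (E \<inter> W \<times> W)\<^sup>*" using to rtrancl_trans by metis
  qed
  then show ?thesis using W1 W2 unfolding W_def by (intro exI[of _ "W1 \<union> W2"]) auto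
qed

lemma cn_conn_iff:
  "cn_connected V (digraph_connectoid_family V E) C \<longleftrightarrow> strongly_connected_set V E C"
proof
  assume a: "cn_connected V (digraph_connectoid_family V E) C"
  show "strongly_connected_set V E C" unfolding strongly_connected_set_def
  proof (intro conjI ballI)
    show "C \<subseteq> V" using a unfolding cn_connected_def by auto
    fix x y assume "x \<in> C" "y \<in> C"
    then obtain X where X: "X \<in> digraph_connectoid_family V E" "X \<subseteq> C" "x \<in> X" "y \<in> X"
      using a unfolding cn_connected_def by blast
    then have "(x,y) \<in> (E \<inter> X \<times> X)\<^sup>*"
      unfolding digraph_connectoid_family_def strongly_connected_set_def by auto
    then show "(x,y) \<in> (E \<inter> C \<times> C)\<^sup>*" using rt_mono_sub[OF X(2)] by blast
  qed
next
  assume a: "strongly_connected_set V E C"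
  have "C \<subseteq> V" using a unfolding strongly_connected_set_def by auto
  moreover have "\<forall>x\<in>C. \<forall>y\<in>C. \<exists>X\<in>digraph_connectoid_family V E. X \<subseteq> C \<and> x \<in> X \<and> y \<in> X"
  proof (intro ballI)
    fix x y assume "x \<in> C" "y \<in> C"
    then obtain W where "finite W \<and> strongly_connected_set V E W \<and> W \<subseteq> C \<and> x \<in> W \<and> y \<in> W"
      using scs_fin[OF a] by blast
    then show "\<exists>X\<in>digraph_connectoid_family V E. X \<subseteq> C \<and> x \<in> X \<and> y \<in> X"
      unfolding digraph_connectoid_family_def by blast
  qed
  ultimately show "cn_connected V (digraph_connectoid_family V E) C"
    unfolding cn_connected_def by blast
qed

lemma scs_single: "u \<in> V \<Longrightarrow> strongly_connected_set V E {u}"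
  unfolding strongly_connected_set_def by auto

definition cc :: "('a \<times> 'a) set \<Rightarrow> 'a set \<Rightarrow> 'a \<Rightarrow> 'a set" where
  "cc E U v = {w. (v,w) \<in> (E \<inter> U \<times> U)\<^sup>* \<and> (w,v) \<in> (E \<inter> U \<times> U)\<^sup>*}"

lemma cc_self: "v \<in> cc E U v" unfolding cc_def by auto

lemma rt_in: "(v,w) \<in> (E \<inter> U \<times> U)\<^sup>* \<Longrightarrow> v \<in> U \<Longrightarrow> w \<in> U"
  by (induction rule: rtrancl_induct) auto

lemma cc_sub: "v \<in> U \<Longrightarrow> cc E U v \<subseteq> U"
proof
  fix w assume "v \<in> U" "w \<in> cc E U v"
  then show "w \<in> U" unfolding cc_def using rt_in[of v w E U] by blast
qed

lemma cc_eq: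
  assumes "w \<in> cc E U v" shows "cc E U w = cc E U v"
proof -
  let ?R = "(E \<inter> U \<times> U)\<^sup>*"
  have vw: "(v,w) \<in> ?R" and wv: "(w,v) \<in> ?R" using assms unfolding cc_def by auto
  have "u \<in> cc E U w \<longleftrightarrow> u \<in> cc E U v" for u
  proof
    assume "u \<in> cc E U w"
    then have "(w,u) \<in> ?R" "(u,w) \<in> ?R" unfolding cc_def by auto
    then have "(v,u) \<in> ?R" "(u,v) \<in> ?R" using vw wv rtrancl_trans[of _ _ "E \<inter> U \<times> U"] by metis+
    then show "u \<in> cc E U v" unfolding cc_def by auto
  next
    assume "u \<in> cc E U v"
    then have "(v,u) \<in> ?R" "(u,v) \<in> ?R" unfolding cc_def by auto
    then have "(w,u) \<in> ?R" "(u,w) \<in> ?R" using vw wv rtrancl_trans[of _ _ "E \<inter> U \<times> U"] by metis+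
    then show "u \<in> cc E U w" unfolding cc_def by auto
  qed
  then show ?thesis by blast
qed

lemma cc_path:
  assumes "(a,b) \<in> (E \<inter> U \<times> U)\<^sup>*" "(b,v) \<in> (E \<inter> U \<times> U)\<^sup>*" "(v,a) \<in> (E \<inter> U \<times> U)\<^sup>*"
  shows "(a,b) \<in> (E \<inter> cc E U v \<times> cc E U v)\<^sup>*"
  using assms
proof (induction rule: converse_rtrancl_induct)
  case base
  then show ?case by simp
next
  case (step a a')
  have aa': "(a,a') \<in> E \<inter> U \<times> U" and a'b: "(a',b) \<in> (E \<inter> U \<times> U)\<^sup>*" using step.hyps by auto
  have bv: "(b,v) \<in> (E \<inter> U \<times> U)\<^sup>*" and va: "(v,a) \<in> (E \<inter> U \<times> U)\<^sup>*" using step.prems by auto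
  have va': "(v,a') \<in> (E \<inter> U \<times> U)\<^sup>*" using va aa' by (rule rtrancl_into_rtrancl)
  have a'v: "(a',v) \<in> (E \<inter> U \<times> U)\<^sup>*" using a'b bv by (rule rtrancl_trans)
  have av: "(a,v) \<in> (E \<inter> U \<times> U)\<^sup>*" using aa' a'v by (rule converse_rtrancl_into_rtrancl)
  have "a \<in> cc E U v" "a' \<in> cc E U v" unfolding cc_def using va av va' a'v by auto
  then have "(a,a') \<in> E \<inter> cc E U v \<times> cc E U v" using aa' by auto
  moreover have "(a',b) \<in> (E \<inter> cc E U v \<times> cc E U v)\<^sup>*" using step.IH bv va' by blast
  ultimately show ?case by (rule converse_rtrancl_into_rtrancl)
qed

lemma cc_scs:
  assumes UV: "U \<subseteq> V" and vU: "v \<in> U"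
  shows "strongly_connected_set V E (cc E U v)"
  unfolding strongly_connected_set_def
proof (intro conjI ballI)
  show "cc E U v \<subseteq> V" using cc_sub[OF vU, of E] UV by blast
  fix x y assume x: "x \<in> cc E U v" and y: "y \<in> cc E U v"
  have xv: "(x,v) \<in> (E \<inter> U \<times> U)\<^sup>*" and vy: "(v,y) \<in> (E \<inter> U \<times> U)\<^sup>*"
    and yv: "(y,v) \<in> (E \<inter> U \<times> U)\<^sup>*" and vx: "(v,x) \<in> (E \<inter> U \<times> U)\<^sup>*"
    using x y unfolding cc_def by auto
  have xy: "(x,y) \<in> (E \<inter> U \<times> U)\<^sup>*" using xv vy by (rule rtrancl_trans)
  show "(x,y) \<in> (E \<inter> cc E U v \<times> cc E U v)\<^sup>*"
    by (rule cc_path[OF xy yv vx])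
qed

lemma cc_max:
  assumes "strongly_connected_set V E C" "C \<subseteq> U" "v \<in> C"
  shows "C \<subseteq> cc E U v"
proof
  fix w assume w: "w \<in> C"
  have "(v,w) \<in> (E \<inter> C \<times> C)\<^sup>*" "(w,v) \<in> (E \<inter> C \<times> C)\<^sup>*"
    using assms(1,3) w unfolding strongly_connected_set_def by auto
  then show "w \<in> cc E U v" unfolding cc_def using rt_mono_sub[OF assms(2)] by blast
qed

lemma maxcomp_iff:
  assumes "U \<subseteq> V"
  shows "(K \<subseteq> U \<and> K \<noteq> {} \<and> strongly_connected_set V E K \<and>
          (\<forall>K'. K \<subseteq> K' \<and> K' \<subseteq> U \<and> strongly_connected_set V E K' \<longrightarrow> K' = K))
      \<longleftrightarrow> (\<exists>v\<in>U. K = cc E U v)"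
proof
  assume a: "K \<subseteq> U \<and> K \<noteq> {} \<and> strongly_connected_set V E K \<and>
          (\<forall>K'. K \<subseteq> K' \<and> K' \<subseteq> U \<and> strongly_connected_set V E K' \<longrightarrow> K' = K)"
  then obtain v where v: "v \<in> K" by blast
  have KU: "K \<subseteq> U" and Ks: "strongly_connected_set V E K" using a by auto
  have 1: "K \<subseteq> cc E U v" using cc_max[OF Ks KU v] .
  have vU: "v \<in> U" using KU v by blast
  have 2: "cc E U v \<subseteq> U" using cc_sub[OF vU] .
  have 3: "strongly_connected_set V E (cc E U v)" using cc_scs[OF assms vU] .
  have "cc E U v = K" using a 1 2 3 by blast
  then show "\<exists>v\<in>U. K = cc E U v" using vU by blast
next
  assume "\<exists>v\<in>U. K = cc E U v"
  then obtain v where v: "v \<in> U" "K = cc E U v" by blast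
  show "K \<subseteq> U \<and> K \<noteq> {} \<and> strongly_connected_set V E K \<and>
          (\<forall>K'. K \<subseteq> K' \<and> K' \<subseteq> U \<and> strongly_connected_set V E K' \<longrightarrow> K' = K)"
  proof (intro conjI allI impI)
    show "K \<subseteq> U" using v cc_sub by metis
    show "K \<noteq> {}" using v cc_self by fast
    show "strongly_connected_set V E K" using v cc_scs[OF assms] by metis
    fix K' assume K': "K \<subseteq> K' \<and> K' \<subseteq> U \<and> strongly_connected_set V E K'"
    have vK': "v \<in> K'" using K' v(2) cc_self by fast
    have "K' \<subseteq> cc E U v" using cc_max[OF _ _ vK'] K' by blast
    then show "K' = K" using K' v by blast
  qed
qed

lemma sc_eq: "strong_components V E A = (cc E (V - A)) ` (V - A)"
proof (rule set_eqI)
  fix K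
  have "V - A \<subseteq> V" by auto
  note m = maxcomp_iff[OF this, of K E]
  show "K \<in> strong_components V E A \<longleftrightarrow> K \<in> (cc E (V - A)) ` (V - A)"
    unfolding strong_components_def mem_Collect_eq image_iff m[symmetric] by blast
qed

lemma cnc_eq:
  assumes "U \<subseteq> V" "U \<noteq> {}"
  shows "cn_components V (digraph_connectoid_family V E) U = (cc E U) ` U"
proof (rule set_eqI)
  fix K
  note m = maxcomp_iff[OF assms(1), of K E]
  have ne: "K \<noteq> {}" if "K \<subseteq> U" "strongly_connected_set V E K"
    "\<forall>K'. K \<subseteq> K' \<and> K' \<subseteq> U \<and> strongly_connected_set V E K' \<longrightarrow> K' = K"
  proof
    assume K0: "K = {}"
    obtain u where u: "u \<in> U" using assms(2) by blast
    have "{u} \<subseteq> U" "strongly_connected_set V E {u}" using u assms(1) scs_single[of u V E] by auto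
    then have "{u} = K" using that(3) K0 by blast
    then show False using K0 by blast
  qed
  show "K \<in> cn_components V (digraph_connectoid_family V E) U \<longleftrightarrow> K \<in> (cc E U) ` U"
    unfolding cn_components_def cn_conn_iff mem_Collect_eq image_iff m[symmetric] using ne by blast
qed

lemma comp_absorb:
  assumes "K \<in> (cc E U) ` U" "strongly_connected_set V E C" "C \<subseteq> U" "x \<in> C" "x \<in> K"
  shows "C \<subseteq> K"
proof -
  obtain v where "K = cc E U v" using assms(1) by blast
  then have "K = cc E U x" using cc_eq assms(5) by metis
  then show ?thesis using cc_max[OF assms(2,3,4)] by simp
qed

lemma comp_disj:
  assumes "K \<in> (cc E U) ` U" "K' \<in> (cc E U) ` U" "x \<in> K" "x \<in> K'"
  shows "K = K'"
  using assms cc_eq by (metis imageE)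

definition chainH :: "(nat \<Rightarrow> 'a set) \<Rightarrow> bool" where
  "chainH H \<longleftrightarrow> (\<forall>i j. H i \<inter> H j \<noteq> {} \<longleftrightarrow> i \<le> j + 1 \<and> j \<le> i + 1)"

lemma chain_ne: "chainH H \<Longrightarrow> H n \<noteq> {}"
  unfolding chainH_def by (metis inf.idem le_add1)

lemma chain_two: "chainH H \<Longrightarrow> x \<in> H i \<Longrightarrow> x \<in> H j \<Longrightarrow> j \<le> i + 1"
  unfolding chainH_def by blast

lemma chain_fin_bad:
  assumes "chainH H" "finite A"
  shows "finite {n. H n \<inter> A \<noteq> {}}"
proof -
  have "{n. H n \<inter> A \<noteq> {}} = (\<Union>x\<in>A. {n. x \<in> H n})" by auto
  moreover have "finite {n. x \<in> H n}" for x
  proof (cases "\<exists>i. x \<in> H i")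
    case True
    then obtain i where "x \<in> H i" by blast
    then have "{n. x \<in> H n} \<subseteq> {..i+1}" using chain_two[OF assms(1)] by auto
    then show ?thesis using finite_subset by blast
  next
    case False
    then show ?thesis by simp
  qed
  ultimately show ?thesis using assms(2) by simp
qed

lemma fin_nat_bound: "finite (S :: nat set) \<Longrightarrow> \<exists>n0. \<forall>n\<ge>n0. n \<notin> S"
  by (metis finite_nat_set_iff_bounded_le not_less_eq_eq)

lemma chain_infinite:
  assumes "chainH H" shows "infinite (\<Union>n. H n)"
proof
  assume f: "finite (\<Union>n. H n)"
  have "{n. H n \<inter> (\<Union>n. H n) \<noteq> {}} = UNIV" using chain_ne[OF assms] by blast
  then show False using chain_fin_bad[OF assms f] by simp
qed

lemma scs_chain:
  assumes s: "\<And>n. strongly_connected_set V E (H n)" and c: "\<And>n. H n \<inter> H (Suc n) \<noteq> {}"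
  shows "strongly_connected_set V E (\<Union>n. H n)"
proof -
  have fin: "strongly_connected_set V E (\<Union>k\<in>{..m}. H k)" for m
  proof (induction m)
    case 0
    then show ?case using s by simp
  next
    case (Suc m)
    have eq: "(\<Union>k\<in>{..Suc m}. H k) = (\<Union>k\<in>{..m}. H k) \<union> H (Suc m)"
      by (auto simp: atMost_Suc)
    have "(\<Union>k\<in>{..m}. H k) \<inter> H (Suc m) \<noteq> {}" using c[of m] by auto
    then show ?case unfolding eq by (rule scs_union[OF Suc.IH s])
  qed
  show ?thesis unfolding strongly_connected_set_def
  proof (intro conjI ballI)
    show "(\<Union>n. H n) \<subseteq> V" using s unfolding strongly_connected_set_def by blast
    fix x y assume "x \<in> (\<Union>n. H n)" "y \<in> (\<Union>n. H n)"
    then obtain i j where ij: "x \<in> H i" "y \<in> H j" by blast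
    let ?m = "max i j"
    have xy: "x \<in> (\<Union>k\<in>{..?m}. H k)" "y \<in> (\<Union>k\<in>{..?m}. H k)" using ij by auto
    have p: "(x,y) \<in> (E \<inter> (\<Union>k\<in>{..?m}. H k) \<times> (\<Union>k\<in>{..?m}. H k))\<^sup>*"
      using fin[of ?m] xy unfolding strongly_connected_set_def by blast
    have sub: "(\<Union>k\<in>{..?m}. H k) \<subseteq> (\<Union>n. H n)" by auto
    show "(x,y) \<in> (E \<inter> (\<Union>n. H n) \<times> (\<Union>n. H n))\<^sup>*" by (rule rt_mono_sub[OF sub p])
  qed
qed

lemma neck_basic:
  assumes "necklace V (digraph_connectoid_family V E) N"
  obtains H where "\<And>n. finite (H n)" "\<And>n. strongly_connected_set V E (H n)" "N = (\<Union>n. H n)" "chainH H"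
proof -
  have ex: "\<exists>H :: nat \<Rightarrow> 'a set.
        (\<forall>n. finite (H n) \<and> cn_connected V (digraph_connectoid_family V E) (H n)) \<and>
        N = (\<Union>n. H n) \<and>
        (\<forall>i j. H i \<inter> H j \<noteq> {} \<longleftrightarrow> i \<le> j + 1 \<and> j \<le> i + 1)"
    using assms unfolding necklace_def by (rule conjunct2)
  obtain H :: "nat \<Rightarrow> 'a set" where H0: "(\<forall>n. finite (H n) \<and> cn_connected V (digraph_connectoid_family V E) (H n)) \<and>
        N = (\<Union>n. H n) \<and>
        (\<forall>i j. H i \<inter> H j \<noteq> {} \<longleftrightarrow> i \<le> j + 1 \<and> j \<le> i + 1)"
    using ex by metis
  note H = conjunct1[OF H0] conjunct1[OF conjunct2[OF H0]] conjunct2[OF conjunct2[OF H0]]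
  show ?thesis
  proof (rule that[of H])
    show "finite (H n)" for n using H(1) by blast
    show "strongly_connected_set V E (H n)" for n using H(1) unfolding cn_conn_iff by blast
    show "N = (\<Union>n. H n)" by (rule H(2))
    show "chainH H" unfolding chainH_def by (rule H(3))
  qed
qed

lemma neck_scs:
  "necklace V (digraph_connectoid_family V E) N \<Longrightarrow> strongly_connected_set V E N"
  unfolding necklace_def cn_conn_iff by (elim conjE)

lemma neck_sub: "necklace V (digraph_connectoid_family V E) N \<Longrightarrow> N \<subseteq> V"
proof -
  assume "necklace V (digraph_connectoid_family V E) N"
  then have "strongly_connected_set V E N" by (rule neck_scs)
  then show "N \<subseteq> V" unfolding strongly_connected_set_def by (elim conjE)
qed

lemma neck_inf: "necklace V (digraph_connectoid_family V E) N \<Longrightarrow> infinite N"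
proof -
  assume a: "necklace V (digraph_connectoid_family V E) N"
  obtain H where "N = (\<Union>n. H n)" "chainH H" using neck_basic[OF a] by blast
  then show ?thesis using chain_infinite by simp
qed

lemma neck_tailU:
  assumes "necklace V (digraph_connectoid_family V E) N" "finite X"
  shows "\<exists>U. U \<subseteq> N - X \<and> U \<noteq> {} \<and> strongly_connected_set V E U \<and> finite (N - U)"
proof -
  obtain H where H: "\<And>n. finite (H n)" "\<And>n. strongly_connected_set V E (H n)" "N = (\<Union>n. H n)" "chainH H"
    using neck_basic[OF assms(1)] by blast
  obtain n0 where n0: "\<forall>n\<ge>n0. n \<notin> {n. H n \<inter> X \<noteq> {}}"
    using fin_nat_bound[OF chain_fin_bad[OF H(4) assms(2)]] by blast
  define U where "U = (\<Union>n. H (n0 + n))"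
  have "strongly_connected_set V E U" unfolding U_def
  proof (rule scs_chain)
    show "strongly_connected_set V E (H (n0 + n))" for n using H(2) .
    show "H (n0 + n) \<inter> H (n0 + Suc n) \<noteq> {}" for n using H(4) unfolding chainH_def by auto
  qed
  moreover have "U \<subseteq> N - X"
  proof
    fix x assume "x \<in> U"
    then obtain n where xn: "x \<in> H (n0 + n)" unfolding U_def by blast
    have "H (n0 + n) \<inter> X = {}" using n0 by simp
    then show "x \<in> N - X" using xn unfolding H(3) by blast
  qed
  moreover have "U \<noteq> {}" unfolding U_def using chain_ne[OF H(4)] by blast
  moreover have "N - U \<subseteq> (\<Union>k\<in>{..<n0}. H k)"
  proof
    fix x assume "x \<in> N - U"
    then obtain k where k: "x \<in> H k" "x \<notin> U" unfolding H(3) by blast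
    have "k < n0"
    proof (rule ccontr)
      assume "\<not> k < n0"
      then have "H k = H (n0 + (k - n0))" by simp
      then have "H k \<subseteq> U" unfolding U_def by blast
      then show False using k by blast
    qed
    then show "x \<in> (\<Union>k\<in>{..<n0}. H k)" using k by blast
  qed
  then have "finite (N - U)" using H(1) finite_subset by blast
  ultimately show ?thesis by blast
qed

lemma neck_comp_ex:
  assumes "necklace V (digraph_connectoid_family V E) N" "finite X"
  shows "\<exists>K\<in>strong_components V E X. finite (N - K)"
proof -
  obtain U where U: "U \<subseteq> N - X" "U \<noteq> {}" "strongly_connected_set V E U" "finite (N - U)"
    using neck_tailU[OF assms] by blast
  obtain v where v: "v \<in> U" using U(2) by blast
  have NV: "N \<subseteq> V" using neck_sub[OF assms(1)] .
  have UVX: "U \<subseteq> V - X" using U(1) NV by blast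
  have "U \<subseteq> cc E (V - X) v" using cc_max[OF U(3) UVX v] .
  then have "N - cc E (V - X) v \<subseteq> N - U" by blast
  then have "finite (N - cc E (V - X) v)" using U(4) finite_subset by blast
  moreover have "cc E (V - X) v \<in> strong_components V E X" unfolding sc_eq using v UVX by blast
  ultimately show ?thesis by blast
qed

lemma neck_comp_uniq:
  assumes "necklace V (digraph_connectoid_family V E) N"
    "K \<in> strong_components V E X" "K' \<in> strong_components V E X" "finite (N - K)" "finite (N - K')"
  shows "K = K'"
proof -
  have "N - (K \<inter> K') = (N - K) \<union> (N - K')" by blast
  then have "finite (N - (K \<inter> K'))" using assms(4,5) by simp
  moreover have "N \<inter> (K \<inter> K') \<noteq> {}"
  proof
    assume "N \<inter> (K \<inter> K') = {}"
    then have "N - (K \<inter> K') = N" by blast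
    then show False using \<open>finite (N - (K \<inter> K'))\<close> neck_inf[OF assms(1)] by simp
  qed
  ultimately have "N \<inter> (K \<inter> K') \<noteq> {}" by blast
  then obtain x where "x \<in> K" "x \<in> K'" by blast
  then show ?thesis using comp_disj[of K E "V - X" K' x] assms(2,3) unfolding sc_eq by blast
qed

lemma inf_comp_uniq:
  assumes "infinite N" "K \<in> (cc E U) ` U" "K' \<in> (cc E U) ` U" "finite (N - K)" "finite (N - K')"
  shows "K = K'"
proof -
  have "N - (K \<inter> K') = (N - K) \<union> (N - K')" by blast
  then have f: "finite (N - (K \<inter> K'))" using assms(4,5) by simp
  have "N \<inter> (K \<inter> K') \<noteq> {}"
  proof
    assume "N \<inter> (K \<inter> K') = {}"
    then have "N - (K \<inter> K') = N" by blast
    then show False using f assms(1) by simp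
  qed
  then obtain x where "x \<in> K" "x \<in> K'" by blast
  then show ?thesis using comp_disj[of K E U K' x] assms(2,3) by blast
qed

lemma V_inf_neck: "necklace V (digraph_connectoid_family V E) N \<Longrightarrow> infinite V"
proof -
  assume N: "necklace V (digraph_connectoid_family V E) N"
  show "infinite V"
  proof
    assume "finite V"
    then have "finite N" using neck_sub[OF N] by (rule finite_subset[rotated])
    then show False using neck_inf[OF N] by simp
  qed
qed

lemma cnc_sc:
  assumes "infinite V" "finite X"
  shows "cn_components V (digraph_connectoid_family V E) (V - X) = strong_components V E X"
proof -
  have "V - X \<noteq> {}"
  proof
    assume "V - X = {}"
    then have "V \<subseteq> X" by blast
    then show False using assms finite_subset by blast
  qed
  then have "cn_components V (digraph_connectoid_family V E) (V - X) = (cc E (V - X)) ` (V - X)"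
    by (intro cnc_eq) auto
  then show ?thesis using sc_eq[of V E X] by simp
qed

lemma neck_tail_iff:
  assumes N: "necklace V (digraph_connectoid_family V E) N" and X: "finite X"
    and K: "K \<in> strong_components V E X"
  shows "necklace_tail V (digraph_connectoid_family V E) N X \<subseteq> K \<longleftrightarrow> finite (N - K)"
proof -
  obtain U where U: "U \<subseteq> N - X" "U \<noteq> {}" "strongly_connected_set V E U" "finite (N - U)"
    using neck_tailU[OF N X] by blast
  obtain v where v: "v \<in> U" using U(2) by blast
  have NV: "N \<subseteq> V" using neck_sub[OF N] .
  have NXV: "N - X \<subseteq> V" using NV by blast
  have vNX: "v \<in> N - X" using U(1) v by blast
  have NXne: "N - X \<noteq> {}" using vNX by blast
  define T0 where "T0 = cc E (N - X) v"
  have T0c: "T0 \<in> cn_components V (digraph_connectoid_family V E) (N - X)"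
    unfolding cnc_eq[OF NXV NXne] T0_def using vNX by blast
  have UT0: "U \<subseteq> T0" unfolding T0_def by (rule cc_max[OF U(3) U(1) v])
  have fT0: "finite (N - T0)"
  proof -
    have "N - T0 \<subseteq> N - U" using UT0 by blast
    then show ?thesis using U(4) finite_subset by blast
  qed
  have tail: "necklace_tail V (digraph_connectoid_family V E) N X = T0"
    unfolding necklace_tail_def
  proof (rule the_equality)
    show "T0 \<in> cn_components V (digraph_connectoid_family V E) (N - X) \<and> finite (N - T0)"
      using T0c fT0 by blast
    fix T assume T: "T \<in> cn_components V (digraph_connectoid_family V E) (N - X) \<and> finite (N - T)"
    show "T = T0"
      apply (rule inf_comp_uniq[OF neck_inf[OF N], of T E "N - X" T0])
      using T T0c fT0 unfolding cnc_eq[OF NXV NXne] by auto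
  qed
  define K0 where "K0 = cc E (V - X) v"
  have K0c: "K0 \<in> strong_components V E X" unfolding K0_def sc_eq using vNX NV by blast
  have T0s: "strongly_connected_set V E T0" unfolding T0_def using cc_scs[OF NXV vNX] .
  have T0sub: "T0 \<subseteq> V - X" unfolding T0_def using cc_sub[OF vNX, of E] NV by blast
  have T0K0: "T0 \<subseteq> K0" unfolding K0_def by (rule cc_max[OF T0s T0sub]) (simp add: T0_def cc_self)
  have fK0: "finite (N - K0)"
  proof -
    have "N - K0 \<subseteq> N - T0" using T0K0 by blast
    then show ?thesis using fT0 finite_subset by blast
  qed
  show ?thesis unfolding tail
  proof
    assume "T0 \<subseteq> K"
    then have "N - K \<subseteq> N - T0" by blast
    then show "finite (N - K)" using fT0 finite_subset by blast
  next
    assume "finite (N - K)"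
    then have "K = K0" using neck_comp_uniq[OF N K K0c] fK0 by blast
    then show "T0 \<subseteq> K" using T0K0 by simp
  qed
qed

definition dir1 :: "'a set \<Rightarrow> ('a \<times> 'a) set \<Rightarrow> (nat \<Rightarrow> 'a) \<Rightarrow> 'a set \<Rightarrow> 'a set" where
  "dir1 V E r = (\<lambda>A. if finite A \<and> A \<subseteq> V then (THE K. K \<in> strong_components V E A \<and> tail_in r K) else {})"

definition dir2 :: "'a set \<Rightarrow> ('a \<times> 'a) set \<Rightarrow> 'a set \<Rightarrow> 'a set \<Rightarrow> 'a set" where
  "dir2 V E N = (\<lambda>A. if finite A \<and> A \<subseteq> V then (THE K. K \<in> strong_components V E A \<and> finite (N - K)) else {})"

lemma tail_uniq:
  assumes "K \<in> strong_components V E A" "K' \<in> strong_components V E A" "tail_in r K" "tail_in r K'"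
  shows "K = K'"
proof -
  obtain n where n: "\<forall>m\<ge>n. r m \<in> K" using assms(3) unfolding tail_in_def by blast
  obtain n' where n': "\<forall>m\<ge>n'. r m \<in> K'" using assms(4) unfolding tail_in_def by blast
  have "r (max n n') \<in> K" "r (max n n') \<in> K'" using n n' by auto
  then show ?thesis using comp_disj[of K E "V - A" K'] assms(1,2) unfolding sc_eq by blast
qed

lemma dir1_eq:
  assumes "finite A" "A \<subseteq> V" "K \<in> strong_components V E A" "tail_in r K"
  shows "dir1 V E r A = K"
proof -
  have "(THE K. K \<in> strong_components V E A \<and> tail_in r K) = K"
    apply (rule the_equality)
    using assms(3,4) tail_uniq[OF _ assms(3) _ assms(4)] by blast+
  then show ?thesis unfolding dir1_def using assms(1,2) by simp
qed

lemma dir1_prop: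
  assumes "solid_ray V E r" "finite A" "A \<subseteq> V"
  shows "dir1 V E r A \<in> strong_components V E A \<and> tail_in r (dir1 V E r A)"
proof -
  obtain K where "K \<in> strong_components V E A" "tail_in r K"
    using assms unfolding solid_ray_def by blast
  then show ?thesis using dir1_eq[OF assms(2,3)] by simp
qed

lemma dir2_eq:
  assumes "necklace V (digraph_connectoid_family V E) N"
    "finite A" "A \<subseteq> V" "K \<in> strong_components V E A" "finite (N - K)"
  shows "dir2 V E N A = K"
proof -
  have "(THE K. K \<in> strong_components V E A \<and> finite (N - K)) = K"
    apply (rule the_equality)
    using assms(4,5) neck_comp_uniq[OF assms(1) _ assms(4) _ assms(5)] by blast+
  then show ?thesis unfolding dir2_def using assms(2,3) by simp
qed

lemma dir2_prop:
  assumes "necklace V (digraph_connectoid_family V E) N" "finite A" "A \<subseteq> V"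
  shows "dir2 V E N A \<in> strong_components V E A \<and> finite (N - dir2 V E N A)"
proof -
  obtain K where "K \<in> strong_components V E A" "finite (N - K)"
    using neck_comp_ex[OF assms(1,2)] by blast
  then show ?thesis using dir2_eq[OF assms] by simp
qed

lemma ray_equiv_iff:
  assumes "solid_ray V E r" "solid_ray V E s"
  shows "ray_equiv V E r s \<longleftrightarrow> dir1 V E r = dir1 V E s"
proof
  assume a: "ray_equiv V E r s"
  show "dir1 V E r = dir1 V E s"
  proof
    fix A show "dir1 V E r A = dir1 V E s A"
    proof (cases "finite A \<and> A \<subseteq> V")
      case True
      then obtain K where K: "K \<in> strong_components V E A" "tail_in r K" "tail_in s K"
        using a unfolding ray_equiv_def by blast
      then show ?thesis using dir1_eq[of A V K E r] dir1_eq[of A V K E s] True by simp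
    next
      case False
      then show ?thesis unfolding dir1_def by (simp only: if_False)
    qed
  qed
next
  assume a: "dir1 V E r = dir1 V E s"
  show "ray_equiv V E r s" unfolding ray_equiv_def
  proof (intro allI impI)
    fix A assume A: "finite A \<and> A \<subseteq> V"
    have "dir1 V E r A \<in> strong_components V E A \<and> tail_in r (dir1 V E r A)"
      using dir1_prop[OF assms(1)] A by blast
    moreover have "tail_in s (dir1 V E r A)"
      using dir1_prop[OF assms(2)] A unfolding a by blast
    ultimately show "\<exists>K\<in>strong_components V E A. tail_in r K \<and> tail_in s K" by blast
  qed
qed

lemma neck_equiv_iff:
  assumes N: "necklace V (digraph_connectoid_family V E) N"
    and N': "necklace V (digraph_connectoid_family V E) N'"
  shows "necklace_equiv V (digraph_connectoid_family V E) N N' \<longleftrightarrow> dir2 V E N = dir2 V E N'"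
proof -
  have Vinf: "infinite V" using V_inf_neck[OF N] .
  show ?thesis
  proof
    assume a: "necklace_equiv V (digraph_connectoid_family V E) N N'"
    show "dir2 V E N = dir2 V E N'"
    proof
      fix A show "dir2 V E N A = dir2 V E N' A"
      proof (cases "finite A \<and> A \<subseteq> V")
        case True
        have "\<exists>K\<in>cn_components V (digraph_connectoid_family V E) (V - A).
           necklace_tail V (digraph_connectoid_family V E) N A \<subseteq> K \<and>
           necklace_tail V (digraph_connectoid_family V E) N' A \<subseteq> K"
          using a True unfolding necklace_equiv_def by blast
        then obtain K where K: "K \<in> strong_components V E A"
          "necklace_tail V (digraph_connectoid_family V E) N A \<subseteq> K"
          "necklace_tail V (digraph_connectoid_family V E) N' A \<subseteq> K"
          unfolding cnc_sc[OF Vinf conjunct1[OF True]] by blast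
        then have "finite (N - K)" "finite (N' - K)"
          using neck_tail_iff[OF N _ K(1)] neck_tail_iff[OF N' _ K(1)] True by simp_all
        then show ?thesis using dir2_eq[OF N _ _ K(1)] dir2_eq[OF N' _ _ K(1)] True by simp
      next
        case False
        then show ?thesis unfolding dir2_def by (simp only: if_False)
      qed
    qed
  next
    assume a: "dir2 V E N = dir2 V E N'"
    show "necklace_equiv V (digraph_connectoid_family V E) N N'" unfolding necklace_equiv_def
    proof (intro allI impI)
      fix A assume A: "finite A \<and> A \<subseteq> V"
      let ?K = "dir2 V E N A"
      have K: "?K \<in> strong_components V E A" "finite (N - ?K)" using dir2_prop[OF N] A by blast+
      have K': "finite (N' - ?K)" using dir2_prop[OF N'] A unfolding a by blast
      have "necklace_tail V (digraph_connectoid_family V E) N A \<subseteq> ?K"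
           "necklace_tail V (digraph_connectoid_family V E) N' A \<subseteq> ?K"
        using neck_tail_iff[OF N _ K(1)] neck_tail_iff[OF N' _ K(1)] A K(2) K' by simp_all
      then show "\<exists>K\<in>cn_components V (digraph_connectoid_family V E) (V - A).
           necklace_tail V (digraph_connectoid_family V E) N A \<subseteq> K \<and>
           necklace_tail V (digraph_connectoid_family V E) N' A \<subseteq> K"
        unfolding cnc_sc[OF Vinf conjunct1[OF A]] using K(1) by blast
    qed
  qed
qed

lemma neck_to_ray:
  assumes N: "necklace V (digraph_connectoid_family V E) N"
  shows "\<exists>r. directed_ray V E r \<and> (\<forall>t. r t \<in> N)"
proof -
  obtain H where Hf: "\<And>n. finite (H n)" and Hs: "\<And>n. strongly_connected_set V E (H n)"
    and NH: "N = (\<Union>n. H n)" and ch: "chainH H"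
    using neck_basic[OF N] by blast
  have chI: "H i \<inter> H j \<noteq> {} \<longleftrightarrow> i \<le> j + 1 \<and> j \<le> i + 1" for i j
    using ch unfolding chainH_def by blast
  define R where "R n = E \<inter> H (Suc n) \<times> H (Suc n)" for n
  define dist where "dist n v = (LEAST k. \<exists>w\<in>H (Suc (Suc n)). (v,w) \<in> (R n)^^k)" for n v
  define nxt where "nxt n v = (SOME u. (v,u) \<in> R n \<and> dist n u = dist n v - 1)" for n v
  define nrm where "nrm p = (if fst p \<in> H (Suc (Suc (snd p))) then Suc (snd p) else snd p)" for p :: "'a \<times> nat"
  define step where "step p = (nxt (nrm p) (fst p), nrm p)" for p
  have K1: "(v, nxt m v) \<in> R m \<and> dist m (nxt m v) = dist m v - 1 \<and> 0 < dist m v"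
    if v1: "v \<in> H (Suc m)" and v2: "v \<notin> H (Suc (Suc m))" for v m
  proof -
    obtain w0 where w0: "w0 \<in> H (Suc m)" "w0 \<in> H (Suc (Suc m))" using chI[of "Suc m" "Suc (Suc m)"] by auto
    have "(v,w0) \<in> (R m)\<^sup>*" using Hs[of "Suc m"] v1 w0(1) unfolding strongly_connected_set_def R_def by blast
    then obtain k0 where "(v,w0) \<in> (R m)^^k0" using rtrancl_power by blast
    then have ex: "\<exists>k. \<exists>w\<in>H (Suc (Suc m)). (v,w) \<in> (R m)^^k" using w0(2) by blast
    have P: "\<exists>w\<in>H (Suc (Suc m)). (v,w) \<in> (R m)^^(dist m v)"
      unfolding dist_def by (rule LeastI_ex[OF ex])
    then obtain w where w: "w \<in> H (Suc (Suc m))" "(v,w) \<in> (R m)^^(dist m v)" by blast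
    have pos: "0 < dist m v"
    proof (rule ccontr)
      assume "\<not> 0 < dist m v"
      then have "dist m v = 0" by simp
      then have "v = w" using w(2) by simp
      then show False using v2 w(1) by simp
    qed
    then obtain k where k: "dist m v = Suc k" using not0_implies_Suc by blast
    then obtain u where u: "(v,u) \<in> R m" "(u,w) \<in> (R m)^^k" using w(2) relpow_Suc_D2 by metis
    have le: "dist m u \<le> k" unfolding dist_def by (rule Least_le) (use u(2) w(1) in blast)
    have ge: "k \<le> dist m u"
    proof (rule ccontr)
      assume "\<not> k \<le> dist m u"
      then have lt: "Suc (dist m u) < dist m v" using k by simp
      have exu: "\<exists>k. \<exists>w\<in>H (Suc (Suc m)). (u,w) \<in> (R m)^^k" using u(2) w(1) by blast
      obtain w' where w': "w' \<in> H (Suc (Suc m))" "(u,w') \<in> (R m)^^(dist m u)"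
        using LeastI_ex[OF exu] unfolding dist_def by blast
      have "(v,w') \<in> (R m)^^(Suc (dist m u))" using relpow_Suc_I2[OF u(1) w'(2)] .
      then have "\<exists>w\<in>H (Suc (Suc m)). (v,w) \<in> (R m)^^(Suc (dist m u))" using w'(1) by blast
      moreover have "\<not> (\<exists>w\<in>H (Suc (Suc m)). (v,w) \<in> (R m)^^(Suc (dist m u)))"
        using not_less_Least[of "Suc (dist m u)" "\<lambda>k. \<exists>w\<in>H (Suc (Suc m)). (v,w) \<in> (R m)^^k"] lt
        unfolding dist_def by blast
      ultimately show False by blast
    qed
    have "\<exists>u. (v,u) \<in> R m \<and> dist m u = dist m v - 1" using u(1) le ge k by (intro exI[of _ u]) simp
    then have "(v, nxt m v) \<in> R m \<and> dist m (nxt m v) = dist m v - 1"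
      unfolding nxt_def by (rule someI_ex)
    then show ?thesis using pos by blast
  qed
  define Inv where "Inv p \<longleftrightarrow> fst p \<in> H (Suc (snd p)) \<and> fst p \<notin> H (Suc (Suc (Suc (snd p))))" for p :: "'a \<times> nat"
  have K2: "fst p \<in> H (Suc (nrm p)) \<and> fst p \<notin> H (Suc (Suc (nrm p)))" if "Inv p" for p
    using that unfolding Inv_def nrm_def by auto
  have disj2: "x \<in> H (Suc m) \<Longrightarrow> x \<notin> H (Suc (Suc (Suc m)))" for x m
    using chI[of "Suc m" "Suc (Suc (Suc m))"] by auto
  have K3: "Inv (step p)" if "Inv p" for p
  proof -
    have a: "fst p \<in> H (Suc (nrm p))" "fst p \<notin> H (Suc (Suc (nrm p)))" using K2[OF that] by auto
    have "(fst p, nxt (nrm p) (fst p)) \<in> R (nrm p)" using K1[OF a] by blast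
    then have "nxt (nrm p) (fst p) \<in> H (Suc (nrm p))" unfolding R_def by blast
    then show ?thesis unfolding Inv_def step_def using disj2 by simp
  qed
  obtain v0 where v0: "v0 \<in> H (Suc 0)" using chain_ne[OF ch, of "Suc 0"] by blast
  define st where "st t = (step ^^ t) (v0, 0)" for t
  have st0: "st 0 = (v0, 0)" and stS: "st (Suc t) = step (st t)" for t unfolding st_def by simp_all
  have Inv_st: "Inv (st t)" for t
  proof (induction t)
    case 0
    then show ?case unfolding st0 Inv_def using v0 disj2[of v0 0] by simp
  next
    case (Suc t)
    then show ?case unfolding stS by (rule K3)
  qed
  define r where "r t = fst (st t)" for t
  define \<nu> where "\<nu> t = nrm (st t)" for t
  define \<mu> where "\<mu> t = dist (\<nu> t) (r t)" for t
  have A1: "r t \<in> H (Suc (\<nu> t))" "r t \<notin> H (Suc (Suc (\<nu> t)))" for t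
    using K2[OF Inv_st[of t]] unfolding r_def \<nu>_def by auto
  have A2: "r (Suc t) = nxt (\<nu> t) (r t)" "snd (st (Suc t)) = \<nu> t" for t
    unfolding r_def \<nu>_def stS step_def by simp_all
  have A3: "(r t, r (Suc t)) \<in> R (\<nu> t)" "dist (\<nu> t) (r (Suc t)) = \<mu> t - 1" "0 < \<mu> t" for t
    using K1[OF A1(1)[of t] A1(2)[of t]] unfolding A2(1) \<mu>_def by auto
  have A4: "\<nu> (Suc t) = (if r (Suc t) \<in> H (Suc (Suc (\<nu> t))) then Suc (\<nu> t) else \<nu> t)" for t
    unfolding \<nu>_def[of "Suc t"] nrm_def using A2(2)[of t] unfolding r_def by simp
  have A5: "\<nu> t \<le> \<nu> (Suc t)" for t using A4[of t] by simp
  have A6: "\<mu> (Suc t) < \<mu> t" if "\<nu> (Suc t) = \<nu> t" for t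
    unfolding \<mu>_def[of "Suc t"] that A3(2) using A3(3)[of t] by (simp add: \<mu>_def)
  have mono: "t \<le> t' \<Longrightarrow> \<nu> t \<le> \<nu> t'" for t t'
    using lift_Suc_mono_le[of \<nu>] A5 by blast
  have A7: "\<nu> (t + Suc k) = \<nu> t \<Longrightarrow> \<mu> (t + Suc k) < \<mu> t" for t k
  proof (induction k)
    case 0
    then show ?case using A6[of t] by simp
  next
    case (Suc k)
    have "\<nu> t \<le> \<nu> (t + Suc k)" "\<nu> (t + Suc k) \<le> \<nu> (t + Suc (Suc k))" using mono by auto
    then have eq: "\<nu> (t + Suc k) = \<nu> t" using Suc.prems by simp
    have "\<mu> (Suc (t + Suc k)) < \<mu> (t + Suc k)" using A6[of "t + Suc k"] Suc.prems eq by simp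
    then show ?case using Suc.IH[OF eq] by simp
  qed
  have noteq: "r t \<noteq> r t'" if tt: "t < t'" for t t'
  proof
    assume eq: "r t = r t'"
    obtain k where t': "t' = t + Suc k" using less_imp_Suc_add[OF tt] by auto
    have le1: "\<nu> t \<le> \<nu> t'" using mono tt by simp
    have inH: "r t \<in> H (Suc (\<nu> t'))" using A1(1)[of t'] eq by simp
    have "Suc (\<nu> t') \<le> Suc (\<nu> t) + 1" by (rule chain_two[OF ch A1(1)[of t] inH])
    then have "\<nu> t' = \<nu> t \<or> \<nu> t' = Suc (\<nu> t)" using le1 by linarith
    then show False
    proof
      assume e: "\<nu> t' = \<nu> t"
      have "\<nu> (t + Suc k) = \<nu> t" using e unfolding t' .
      then have "\<mu> (t + Suc k) < \<mu> t" by (rule A7)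
      then have "\<mu> t' < \<mu> t" unfolding t' .
      moreover have "\<mu> t' = \<mu> t" unfolding \<mu>_def e eq ..
      ultimately show False by simp
    next
      assume e: "\<nu> t' = Suc (\<nu> t)"
      have "r t \<in> H (Suc (Suc (\<nu> t)))" using inH unfolding e .
      then show False using A1(2)[of t] by blast
    qed
  qed
  have "inj r"
  proof (rule injI)
    fix a b assume "r a = r b"
    then show "a = b" using noteq[of a b] noteq[of b a] by (cases a b rule: linorder_cases) auto
  qed
  moreover have "r t \<in> N" for t using A1(1)[of t] unfolding NH by blast
  moreover have "r t \<in> V" for t using A1(1)[of t] Hs[of "Suc (\<nu> t)"] unfolding strongly_connected_set_def by blast
  moreover have "(r t, r (Suc t)) \<in> E" for t using A3(1)[of t] unfolding R_def by blast
  ultimately show ?thesis unfolding directed_ray_def by blast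
qed

lemma sc_props:
  assumes "K \<in> strong_components V E A"
  shows "strongly_connected_set V E K" "K \<subseteq> V - A" "K \<in> (cc E (V - A)) ` (V - A)"
proof -
  have K: "K \<in> (cc E (V - A)) ` (V - A)" using assms unfolding sc_eq .
  then obtain v where v: "v \<in> V - A" "K = cc E (V - A) v" by blast
  have "V - A \<subseteq> V" by blast
  then show "strongly_connected_set V E K" using cc_scs v by metis
  show "K \<subseteq> V - A" using cc_sub[OF v(1)] v(2) by simp
  show "K \<in> (cc E (V - A)) ` (V - A)" by (rule K)
qed

lemma dir1_mono:
  assumes r: "solid_ray V E r" and A': "finite A'" "A' \<subseteq> V" and AA: "A \<subseteq> A'"
  shows "dir1 V E r A' \<subseteq> dir1 V E r A"
proof -
  have A: "finite A" "A \<subseteq> V" using A' AA finite_subset by auto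
  have P': "dir1 V E r A' \<in> strong_components V E A'" "tail_in r (dir1 V E r A')"
    using dir1_prop[OF r A'] by auto
  have P: "dir1 V E r A \<in> strong_components V E A" "tail_in r (dir1 V E r A)"
    using dir1_prop[OF r A] by auto
  obtain n where n: "\<forall>q\<ge>n. r q \<in> dir1 V E r A" using P(2) unfolding tail_in_def by blast
  obtain n' where n': "\<forall>q\<ge>n'. r q \<in> dir1 V E r A'" using P'(2) unfolding tail_in_def by blast
  have x: "r (max n n') \<in> dir1 V E r A" "r (max n n') \<in> dir1 V E r A'" using n n' by auto
  have sub: "dir1 V E r A' \<subseteq> V - A" using sc_props(2)[OF P'(1)] AA by blast
  show ?thesis
    by (rule comp_absorb[OF sc_props(3)[OF P(1)] sc_props(1)[OF P'(1)] sub x(2) x(1)])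
qed

lemma ray_to_neck:
  assumes r: "solid_ray V E r"
  shows "\<exists>N. necklace V (digraph_connectoid_family V E) N \<and>
     (\<forall>A K. finite A \<and> A \<subseteq> V \<and> K \<in> strong_components V E A \<and> tail_in r K \<longrightarrow> finite (N - K))"
proof -
  define C where "C = dir1 V E r"
  have rV: "r q \<in> V" for q using r unfolding solid_ray_def directed_ray_def by blast
  define mnext where "mnext p = (SOME m'. snd (snd p) < m' \<and> r m' \<in> C (fst p \<union> fst (snd p)))"
    for p :: "'a set \<times> 'a set \<times> nat"
  define Hnext where "Hnext p = (SOME W. finite W \<and> strongly_connected_set V E W \<and> W \<subseteq> C (fst p)
       \<and> r (snd (snd p)) \<in> W \<and> r (mnext p) \<in> W)" for p :: "'a set \<times> 'a set \<times> nat"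
  define step where "step p = (fst p \<union> fst (snd p), Hnext p, mnext p)" for p :: "'a set \<times> 'a set \<times> nat"
  define Inv where "Inv p \<longleftrightarrow> finite (fst p) \<and> fst p \<subseteq> V \<and> finite (fst (snd p)) \<and>
      strongly_connected_set V E (fst (snd p)) \<and> r (snd (snd p)) \<in> fst (snd p) \<and>
      r (snd (snd p)) \<in> C (fst p)" for p :: "'a set \<times> 'a set \<times> nat"
  have S: "Inv (step p) \<and> Hnext p \<subseteq> C (fst p) \<and> r (snd (snd p)) \<in> Hnext p \<and> snd (snd p) < mnext p"
    if I: "Inv p" for p
  proof -
    obtain A H m where p: "p = (A, H, m)" by (cases p) auto
    have I': "finite A" "A \<subseteq> V" "finite H" "strongly_connected_set V E H" "r m \<in> H" "r m \<in> C A"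
      using I unfolding Inv_def p by auto
    have HV: "H \<subseteq> V" using I'(4) unfolding strongly_connected_set_def by blast
    have A'f: "finite (A \<union> H)" "A \<union> H \<subseteq> V" using I' HV by auto
    obtain q0 where q0: "\<forall>q\<ge>q0. r q \<in> C (A \<union> H)"
      using dir1_prop[OF r A'f] unfolding C_def tail_in_def by blast
    have "m < max (Suc m) q0 \<and> r (max (Suc m) q0) \<in> C (A \<union> H)" using q0 by simp
    then have "\<exists>m'. m < m' \<and> r m' \<in> C (A \<union> H)" by blast
    then have M: "m < mnext p \<and> r (mnext p) \<in> C (A \<union> H)"
      unfolding mnext_def p fst_conv snd_conv by (rule someI_ex)
    have CC: "C (A \<union> H) \<subseteq> C A" unfolding C_def by (rule dir1_mono[OF r A'f]) blast
    have CA: "strongly_connected_set V E (C A)"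
      using sc_props(1) dir1_prop[OF r I'(1,2)] unfolding C_def by blast
    have "\<exists>W. finite W \<and> strongly_connected_set V E W \<and> W \<subseteq> C A \<and> r m \<in> W \<and> r (mnext p) \<in> W"
      using scs_fin[OF CA I'(6)] M CC by blast
    then have W: "finite (Hnext p) \<and> strongly_connected_set V E (Hnext p) \<and> Hnext p \<subseteq> C A
       \<and> r m \<in> Hnext p \<and> r (mnext p) \<in> Hnext p"
      unfolding Hnext_def p fst_conv snd_conv by (rule someI_ex)
    have "Inv (step p)" unfolding Inv_def step_def using A'f W M unfolding p by simp
    then show ?thesis using W M unfolding p by simp
  qed
  obtain q0 where q0: "\<forall>q\<ge>q0. r q \<in> C {}" using dir1_prop[OF r, of "{}"] unfolding C_def tail_in_def by auto
  define s0 where "s0 = ({} :: 'a set, {r q0}, q0)"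
  have I0: "Inv s0" unfolding Inv_def s0_def using q0 scs_single[OF rV[of q0], of E] by simp
  define st where "st n = (step ^^ n) s0" for n
  have stS: "st (Suc n) = step (st n)" and st0: "st 0 = s0" for n unfolding st_def by simp_all
  have Ist: "Inv (st n)" for n
    by (induction n) (simp_all add: st0 I0 stS S)
  define A where "A n = fst (st n)" for n
  define Hs where "Hs n = fst (snd (st n))" for n
  define m where "m n = snd (snd (st n))" for n
  have F1: "A (Suc n) = A n \<union> Hs n" "Hs (Suc n) \<subseteq> C (A n)" "r (m n) \<in> Hs (Suc n)" "m n < m (Suc n)"
     "r (m n) \<in> Hs n" "finite (Hs n)" "strongly_connected_set V E (Hs n)" for n
  proof -
    note s = S[OF Ist[of n]]
    show "A (Suc n) = A n \<union> Hs n" unfolding A_def Hs_def stS step_def by simp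
    show "Hs (Suc n) \<subseteq> C (A n)" using s unfolding A_def Hs_def stS step_def by simp
    show "r (m n) \<in> Hs (Suc n)" using s unfolding m_def Hs_def stS step_def by simp
    show "m n < m (Suc n)" using s unfolding m_def stS step_def by simp
    show "r (m n) \<in> Hs n" "finite (Hs n)" "strongly_connected_set V E (Hs n)"
      using Ist[of n] unfolding Inv_def m_def Hs_def by auto
  qed
  have A0: "A 0 = {}" unfolding A_def st0 s0_def by simp
  have An: "A n = (\<Union>k\<in>{..<n}. Hs k)" for n
  proof (induction n)
    case 0
    then show ?case using A0 by simp
  next
    case (Suc n)
    then show ?case using F1(1)[of n] by (simp add: lessThan_Suc Un_commute)
  qed
  have AV: "finite (A n) \<and> A n \<subseteq> V" for n using Ist[of n] unfolding Inv_def A_def by blast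
  have disj: "Hs (Suc n) \<inter> Hs k = {}" if "k < n" for k n
  proof -
    have "Hs k \<subseteq> A n" unfolding An using that by blast
    moreover have "C (A n) \<subseteq> V - A n"
      using sc_props(2) dir1_prop[OF r] AV[of n] unfolding C_def by blast
    ultimately show ?thesis using F1(2)[of n] by blast
  qed
  have ch: "chainH Hs" unfolding chainH_def
  proof (intro allI)
    fix i j
    show "Hs i \<inter> Hs j \<noteq> {} \<longleftrightarrow> i \<le> j + 1 \<and> j \<le> i + 1"
    proof
      assume ne: "Hs i \<inter> Hs j \<noteq> {}"
      show "i \<le> j + 1 \<and> j \<le> i + 1"
      proof (rule ccontr)
        assume "\<not> (i \<le> j + 1 \<and> j \<le> i + 1)"
        then have "j + 1 < i \<or> i + 1 < j" by linarith
        then show False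
        proof
          assume "j + 1 < i"
          then obtain n where "i = Suc n" "j < n" by (cases i) auto
          then show False using disj[of j n] ne by (simp add: Int_commute)
        next
          assume "i + 1 < j"
          then obtain n where "j = Suc n" "i < n" by (cases j) auto
          then show False using disj[of i n] ne by (simp add: Int_commute)
        qed
      qed
    next
      assume "i \<le> j + 1 \<and> j \<le> i + 1"
      then have "i = j \<or> j = Suc i \<or> i = Suc j" by linarith
      then show "Hs i \<inter> Hs j \<noteq> {}" using F1(3) F1(5) by auto
    qed
  qed
  define N where "N = (\<Union>n. Hs n)"
  have Ns: "strongly_connected_set V E N" unfolding N_def
  proof (rule scs_chain)
    show "strongly_connected_set V E (Hs n)" for n by (rule F1(7))
    show "Hs n \<inter> Hs (Suc n) \<noteq> {}" for n using F1(3,5)[of n] by blast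
  qed
  have neck: "necklace V (digraph_connectoid_family V E) N"
    unfolding necklace_def cn_conn_iff
  proof (intro conjI exI[of _ Hs])
    show "strongly_connected_set V E N" by (rule Ns)
    show "\<forall>n. finite (Hs n) \<and> strongly_connected_set V E (Hs n)" using F1(6,7) by blast
    show "N = (\<Union>n. Hs n)" by (rule N_def)
    show "\<forall>i j. (Hs i \<inter> Hs j \<noteq> {}) = (i \<le> j + 1 \<and> j \<le> i + 1)" using ch unfolding chainH_def .
  qed
  have mge: "n \<le> m n" for n
  proof (induction n)
    case 0 then show ?case by simp
  next
    case (Suc n) then show ?case using F1(4)[of n] by simp
  qed
  have tl: "finite (N - K)"
    if A': "finite A'" "A' \<subseteq> V" and K: "K \<in> strong_components V E A'" and tK: "tail_in r K" for A' K
  proof -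
    obtain p where p: "\<forall>q\<ge>p. r q \<in> K" using tK unfolding tail_in_def by blast
    obtain n1 where n1: "\<forall>n\<ge>n1. n \<notin> {n. Hs n \<inter> A' \<noteq> {}}"
      using fin_nat_bound[OF chain_fin_bad[OF ch A'(1)]] by blast
    have big: "Hs n \<subseteq> K" if n: "max p n1 \<le> n" for n
    proof -
      have "Hs n \<inter> A' = {}" using n1 n by simp
      moreover have "Hs n \<subseteq> V" using F1(7)[of n] unfolding strongly_connected_set_def by blast
      ultimately have sub: "Hs n \<subseteq> V - A'" by blast
      have "r (m n) \<in> K" using p mge[of n] n by simp
      then show ?thesis using comp_absorb[OF sc_props(3)[OF K] F1(7)[of n] sub F1(5)[of n]] by blast
    qed
    have "N - K \<subseteq> (\<Union>k\<in>{..<max p n1}. Hs k)"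
    proof
      fix x assume "x \<in> N - K"
      then obtain k where k: "x \<in> Hs k" "x \<notin> K" unfolding N_def by blast
      have "k < max p n1" using big[of k] k by (meson not_le subsetD)
      then show "x \<in> (\<Union>k\<in>{..<max p n1}. Hs k)" using k by blast
    qed
    then show ?thesis using F1(6) finite_subset by blast
  qed
  show ?thesis using neck tl by blast
qed

lemma gen_homeo:
  assumes bij: "bij_betw g S1 S2" and B1: "\<forall>b\<in>B1. b \<subseteq> S1" and cov: "S1 \<subseteq> \<Union>B1"
    and B2: "B2 = (\<lambda>b. g ` b) ` B1"
  shows "subtopology (topology_generated_by B1) S1 homeomorphic_space
         subtopology (topology_generated_by B2) S2"
proof -
  define h where "h = inv_into S1 g"
  have inj: "inj_on g S1" and im: "g ` S1 = S2" using bij unfolding bij_betw_def by auto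
  have hg: "h (g x) = x" if "x \<in> S1" for x unfolding h_def using inv_into_f_f[OF inj that] .
  have gh: "g (h y) = y" if "y \<in> S2" for y unfolding h_def using f_inv_into_f[of y g S1] that im by simp
  have hS: "h y \<in> S1" if "y \<in> S2" for y unfolding h_def using inv_into_into[of y g S1] that im by simp
  have gS: "g x \<in> S2" if "x \<in> S1" for x using im that by blast
  have tX: "topspace (subtopology (topology_generated_by B1) S1) = S1" using cov by auto
  have UB2: "\<Union>B2 = g ` (\<Union>B1)" unfolding B2 by auto
  have tY: "topspace (subtopology (topology_generated_by B2) S2) = S2"
    using cov im unfolding topspace_subtopology topology_generated_by_topspace UB2 by blast
  have oX: "openin (subtopology (topology_generated_by B1) S1) b" if "b \<in> B1" for b
  proof -
    have "openin (topology_generated_by B1) b" using that by (rule topology_generated_by_Basis)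
    moreover have "b = b \<inter> S1" using B1 that by blast
    ultimately show ?thesis unfolding openin_subtopology by blast
  qed
  have oY: "openin (subtopology (topology_generated_by B2) S2) (g ` b)" if "b \<in> B1" for b
  proof -
    have "g ` b \<in> B2" unfolding B2 using that by blast
    then have "openin (topology_generated_by B2) (g ` b)" by (rule topology_generated_by_Basis)
    moreover have "g ` b = g ` b \<inter> S2" using B1 that im by blast
    ultimately show ?thesis unfolding openin_subtopology by blast
  qed
  have cg: "continuous_map (subtopology (topology_generated_by B1) S1) (subtopology (topology_generated_by B2) S2) g"
    unfolding continuous_map_in_subtopology
  proof
    show "continuous_map (subtopology (topology_generated_by B1) S1) (topology_generated_by B2) g"
    proof (rule continuous_on_generated_topo)
      fix U assume "U \<in> B2"
      then obtain b where b: "b \<in> B1" "U = g ` b" unfolding B2 by blast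
      have "g -` U \<inter> S1 = b"
      proof
        show "g -` U \<inter> S1 \<subseteq> b"
        proof
          fix x assume x: "x \<in> g -` U \<inter> S1"
          then obtain y where y: "y \<in> b" "g x = g y" using b(2) by blast
          have "y \<in> S1" using B1 b(1) y(1) by blast
          then have "x = y" using inj x y(2) unfolding inj_on_def by blast
          then show "x \<in> b" using y by simp
        qed
        show "b \<subseteq> g -` U \<inter> S1" using b B1 by blast
      qed
      then show "openin (subtopology (topology_generated_by B1) S1)
          (g -` U \<inter> topspace (subtopology (topology_generated_by B1) S1))"
        unfolding tX using oX[OF b(1)] by simp
    next
      show "g ` topspace (subtopology (topology_generated_by B1) S1) \<subseteq> \<Union> B2"
        unfolding tX UB2 using cov by blast
    qed
    show "g \<in> topspace (subtopology (topology_generated_by B1) S1) \<rightarrow> S2"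
      unfolding tX using gS by blast
  qed
  have ch: "continuous_map (subtopology (topology_generated_by B2) S2) (subtopology (topology_generated_by B1) S1) h"
    unfolding continuous_map_in_subtopology
  proof
    show "continuous_map (subtopology (topology_generated_by B2) S2) (topology_generated_by B1) h"
    proof (rule continuous_on_generated_topo)
      fix b assume b: "b \<in> B1"
      have "h -` b \<inter> S2 = g ` b"
      proof
        show "h -` b \<inter> S2 \<subseteq> g ` b"
        proof
          fix y assume y: "y \<in> h -` b \<inter> S2"
          then have "y = g (h y)" using gh by simp
          then show "y \<in> g ` b" using y by blast
        qed
        show "g ` b \<subseteq> h -` b \<inter> S2"
        proof
          fix y assume "y \<in> g ` b"
          then obtain x where x: "x \<in> b" "y = g x" by blast
          have "x \<in> S1" using B1 b x(1) by blast
          then show "y \<in> h -` b \<inter> S2" using x hg gS by simp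
        qed
      qed
      then show "openin (subtopology (topology_generated_by B2) S2)
          (h -` b \<inter> topspace (subtopology (topology_generated_by B2) S2))"
        unfolding tY using oY[OF b] by simp
    next
      show "h ` topspace (subtopology (topology_generated_by B2) S2) \<subseteq> \<Union> B1"
        unfolding tY using hS cov by blast
    qed
    show "h \<in> topspace (subtopology (topology_generated_by B2) S2) \<rightarrow> S1"
      unfolding tY using hS by blast
  qed
  have "homeomorphic_maps (subtopology (topology_generated_by B1) S1) (subtopology (topology_generated_by B2) S2) g h"
    unfolding homeomorphic_maps_def tX tY using cg ch hg gh by blast
  then show ?thesis unfolding homeomorphic_space_def by blast
qed

lemma dg_side:
  "dg_end_space V E homeomorphic_space
     subtopology (topology_generated_by
        {{d \<in> dir1 V E ` {r. solid_ray V E r}. d A = K} | A K.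
            finite A \<and> A \<subseteq> V \<and> K \<in> strong_components V E A})
      (dir1 V E ` {r. solid_ray V E r})"
proof -
  define cls where "cls r = {s. solid_ray V E s \<and> ray_equiv V E r s}" for r
  define \<Delta> where "\<Delta> = dir1 V E ` {r. solid_ray V E r}"
  define G where "G \<omega> = (\<lambda>A. if finite A \<and> A \<subseteq> V then dg_end_comp V E A \<omega> else {})" for \<omega>
  have ends: "dg_ends V E = cls ` {r. solid_ray V E r}" unfolding dg_ends_def cls_def by blast
  have cls_alt: "cls r = {s. solid_ray V E s \<and> dir1 V E r = dir1 V E s}" if "solid_ray V E r" for r
    unfolding cls_def using ray_equiv_iff[OF that] by blast
  have self: "r \<in> cls r" if "solid_ray V E r" for r using cls_alt[OF that] that by simp
  have clsEq: "cls r = cls s \<longleftrightarrow> dir1 V E r = dir1 V E s" if r: "solid_ray V E r" and s: "solid_ray V E s" for r s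
  proof
    assume "cls r = cls s"
    then have "s \<in> cls r" using self[OF s] by simp
    then show "dir1 V E r = dir1 V E s" using cls_alt[OF r] by simp
  next
    assume "dir1 V E r = dir1 V E s"
    then show "cls r = cls s" unfolding cls_alt[OF r] cls_alt[OF s] by simp
  qed
  have comp: "dg_end_comp V E A (cls r) = dir1 V E r A"
    if r: "solid_ray V E r" and A: "finite A" "A \<subseteq> V" for r A
    unfolding dg_end_comp_def
  proof (rule the_equality)
    have "tail_in s (dir1 V E r A)" if "s \<in> cls r" for s
    proof -
      have s: "solid_ray V E s" "dir1 V E r = dir1 V E s" using that cls_alt[OF r] by auto
      show ?thesis using dir1_prop[OF s(1) A] s(2) by simp
    qed
    then show "dir1 V E r A \<in> strong_components V E A \<and> (\<forall>s\<in>cls r. tail_in s (dir1 V E r A))"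
      using dir1_prop[OF r A] by blast
  next
    fix K assume K: "K \<in> strong_components V E A \<and> (\<forall>s\<in>cls r. tail_in s K)"
    then have "tail_in r K" using self[OF r] by blast
    then have "dir1 V E r A = K" using dir1_eq[OF A] K by blast
    then show "K = dir1 V E r A" by simp
  qed
  have Gcls: "G (cls r) = dir1 V E r" if r: "solid_ray V E r" for r
  proof
    fix A show "G (cls r) A = dir1 V E r A"
    proof (cases "finite A \<and> A \<subseteq> V")
      case True then show ?thesis unfolding G_def using comp[OF r] by simp
    next
      case False then show ?thesis unfolding G_def dir1_def by (simp only: if_False)
    qed
  qed
  have bij: "bij_betw G (dg_ends V E) \<Delta>"
    unfolding bij_betw_def
  proof
    show "inj_on G (dg_ends V E)"
    proof (rule inj_onI)
      fix x y assume x: "x \<in> dg_ends V E" and y: "y \<in> dg_ends V E" and e: "G x = G y"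
      obtain r where r: "solid_ray V E r" "x = cls r" using x unfolding ends by blast
      obtain s where s: "solid_ray V E s" "y = cls s" using y unfolding ends by blast
      have "dir1 V E r = dir1 V E s" using e Gcls r s by simp
      then show "x = y" using clsEq[OF r(1) s(1)] r s by simp
    qed
    show "G ` dg_ends V E = \<Delta>" unfolding ends \<Delta>_def image_image using Gcls by auto
  qed
  define B1 where "B1 = {{\<omega> \<in> dg_ends V E. dg_end_comp V E A \<omega> = K} | A K.
             finite A \<and> A \<subseteq> V \<and> K \<in> strong_components V E A}"
  define B2 where "B2 = {{d \<in> \<Delta>. d A = K} | A K. finite A \<and> A \<subseteq> V \<and> K \<in> strong_components V E A}"
  have imgeq: "G ` {\<omega> \<in> dg_ends V E. dg_end_comp V E A \<omega> = K} = {d \<in> \<Delta>. d A = K}"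
    if A: "finite A" "A \<subseteq> V" for A K
  proof
    show "G ` {\<omega> \<in> dg_ends V E. dg_end_comp V E A \<omega> = K} \<subseteq> {d \<in> \<Delta>. d A = K}"
    proof
      fix d assume "d \<in> G ` {\<omega> \<in> dg_ends V E. dg_end_comp V E A \<omega> = K}"
      then obtain \<omega> where w: "\<omega> \<in> dg_ends V E" "dg_end_comp V E A \<omega> = K" "d = G \<omega>" by blast
      obtain r where r: "solid_ray V E r" "\<omega> = cls r" using w(1) unfolding ends by blast
      have "d = dir1 V E r" using w(3) r Gcls by simp
      moreover have "dir1 V E r A = K" using w(2) r comp[OF r(1) A] by simp
      ultimately show "d \<in> {d \<in> \<Delta>. d A = K}" unfolding \<Delta>_def using r(1) by blast
    qed
    show "{d \<in> \<Delta>. d A = K} \<subseteq> G ` {\<omega> \<in> dg_ends V E. dg_end_comp V E A \<omega> = K}"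
    proof
      fix d assume "d \<in> {d \<in> \<Delta>. d A = K}"
      then obtain r where r: "solid_ray V E r" "d = dir1 V E r" "d A = K" unfolding \<Delta>_def by blast
      have "cls r \<in> dg_ends V E" unfolding ends using r(1) by blast
      moreover have "dg_end_comp V E A (cls r) = K" using comp[OF r(1) A] r by simp
      moreover have "G (cls r) = d" using Gcls[OF r(1)] r(2) by simp
      ultimately show "d \<in> G ` {\<omega> \<in> dg_ends V E. dg_end_comp V E A \<omega> = K}" by blast
    qed
  qed
  have B2eq: "B2 = (\<lambda>b. G ` b) ` B1"
  proof
    show "B2 \<subseteq> (\<lambda>b. G ` b) ` B1"
    proof
      fix x assume "x \<in> B2"
      then obtain A K where AK: "x = {d \<in> \<Delta>. d A = K}" "finite A" "A \<subseteq> V" "K \<in> strong_components V E A"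
        unfolding B2_def by blast
      then have "x = G ` {\<omega> \<in> dg_ends V E. dg_end_comp V E A \<omega> = K}" using imgeq by simp
      moreover have "{\<omega> \<in> dg_ends V E. dg_end_comp V E A \<omega> = K} \<in> B1" unfolding B1_def using AK by blast
      ultimately show "x \<in> (\<lambda>b. G ` b) ` B1" by blast
    qed
    show "(\<lambda>b. G ` b) ` B1 \<subseteq> B2"
    proof
      fix x assume "x \<in> (\<lambda>b. G ` b) ` B1"
      then obtain A K where AK: "x = G ` {\<omega> \<in> dg_ends V E. dg_end_comp V E A \<omega> = K}" "finite A" "A \<subseteq> V"
          "K \<in> strong_components V E A"
        unfolding B1_def by blast
      then have "x = {d \<in> \<Delta>. d A = K}" using imgeq by simp
      then show "x \<in> B2" unfolding B2_def using AK by blast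
    qed
  qed
  have B1sub: "\<forall>b\<in>B1. b \<subseteq> dg_ends V E" unfolding B1_def by blast
  have cov: "dg_ends V E \<subseteq> \<Union>B1"
  proof
    fix \<omega> assume w: "\<omega> \<in> dg_ends V E"
    obtain r where r: "solid_ray V E r" "\<omega> = cls r" using w unfolding ends by blast
    have f: "finite ({} :: 'a set)" "{} \<subseteq> V" by auto
    have "dir1 V E r {} \<in> strong_components V E {}" using dir1_prop[OF r(1) f] by blast
    moreover have "dg_end_comp V E {} \<omega> = dir1 V E r {}" using comp[OF r(1) f] r(2) by simp
    ultimately have "{\<omega>' \<in> dg_ends V E. dg_end_comp V E {} \<omega>' = dir1 V E r {}} \<in> B1"
      unfolding B1_def using f by blast
    moreover have "\<omega> \<in> {\<omega>' \<in> dg_ends V E. dg_end_comp V E {} \<omega>' = dir1 V E r {}}"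
      using w \<open>dg_end_comp V E {} \<omega> = dir1 V E r {}\<close> by blast
    ultimately show "\<omega> \<in> \<Union>B1" by blast
  qed
  have "subtopology (topology_generated_by B1) (dg_ends V E) homeomorphic_space
         subtopology (topology_generated_by B2) \<Delta>"
    by (rule gen_homeo[OF bij B1sub cov B2eq])
  then show ?thesis unfolding dg_end_space_def B1_def B2_def \<Delta>_def .
qed

lemma cn_side:
  assumes Vinf: "infinite V"
  shows "cn_end_space V (digraph_connectoid_family V E) homeomorphic_space
     subtopology (topology_generated_by
        {{d \<in> dir2 V E ` {N. necklace V (digraph_connectoid_family V E) N}. d A = K} | A K.
            finite A \<and> A \<subseteq> V \<and> K \<in> strong_components V E A})
      (dir2 V E ` {N. necklace V (digraph_connectoid_family V E) N})"
proof -
  define F where "F = digraph_connectoid_family V E"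
  define cls where "cls N = {N'. necklace V F N' \<and> necklace_equiv V F N N'}" for N
  define \<Delta> where "\<Delta> = dir2 V E ` {N. necklace V F N}"
  define G where "G \<omega> = (\<lambda>A. if finite A \<and> A \<subseteq> V then cn_end_comp V F A \<omega> else {})" for \<omega>
  have ends: "cn_ends V F = cls ` {N. necklace V F N}" unfolding cn_ends_def cls_def by blast
  have cls_alt: "cls N = {N'. necklace V F N' \<and> dir2 V E N = dir2 V E N'}" if "necklace V F N" for N
    unfolding cls_def using neck_equiv_iff[OF that[unfolded F_def]] unfolding F_def by blast
  have self: "N \<in> cls N" if "necklace V F N" for N using cls_alt[OF that] that by simp
  have clsEq: "cls N = cls M \<longleftrightarrow> dir2 V E N = dir2 V E M" if N: "necklace V F N" and M: "necklace V F M" for N M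
  proof
    assume "cls N = cls M"
    then have "M \<in> cls N" using self[OF M] by simp
    then show "dir2 V E N = dir2 V E M" using cls_alt[OF N] by simp
  next
    assume "dir2 V E N = dir2 V E M"
    then show "cls N = cls M" unfolding cls_alt[OF N] cls_alt[OF M] by simp
  qed
  have comp: "cn_end_comp V F A (cls N) = dir2 V E N A"
    if N: "necklace V F N" and A: "finite A" "A \<subseteq> V" for N A
    unfolding cn_end_comp_def F_def cnc_sc[OF Vinf A(1)]
  proof (rule the_equality)
    have "necklace_tail V (digraph_connectoid_family V E) M A \<subseteq> dir2 V E N A" if "M \<in> cls N" for M
    proof -
      have M: "necklace V F M" "dir2 V E N = dir2 V E M" using that cls_alt[OF N] by auto
      have P: "dir2 V E M A \<in> strong_components V E A" "finite (M - dir2 V E M A)"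
        using dir2_prop[OF M(1)[unfolded F_def] A] by auto
      show ?thesis using neck_tail_iff[OF M(1)[unfolded F_def] A(1) P(1)] P(2) M(2) by simp
    qed
    then show "dir2 V E N A \<in> strong_components V E A \<and>
        (\<forall>M\<in>cls N. necklace_tail V (digraph_connectoid_family V E) M A \<subseteq> dir2 V E N A)"
      using dir2_prop[OF N[unfolded F_def] A] by blast
  next
    fix K assume K: "K \<in> strong_components V E A \<and>
        (\<forall>M\<in>cls N. necklace_tail V (digraph_connectoid_family V E) M A \<subseteq> K)"
    then have "necklace_tail V (digraph_connectoid_family V E) N A \<subseteq> K" using self[OF N] by blast
    then have "finite (N - K)" using neck_tail_iff[OF N[unfolded F_def] A(1)] K by blast
    then have "dir2 V E N A = K" using dir2_eq[OF N[unfolded F_def] A] K by blast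
    then show "K = dir2 V E N A" by simp
  qed
  have Gcls: "G (cls N) = dir2 V E N" if N: "necklace V F N" for N
  proof
    fix A show "G (cls N) A = dir2 V E N A"
    proof (cases "finite A \<and> A \<subseteq> V")
      case True then show ?thesis unfolding G_def using comp[OF N] by simp
    next
      case False then show ?thesis unfolding G_def dir2_def by (simp only: if_False)
    qed
  qed
  have bij: "bij_betw G (cn_ends V F) \<Delta>"
    unfolding bij_betw_def
  proof
    show "inj_on G (cn_ends V F)"
    proof (rule inj_onI)
      fix x y assume x: "x \<in> cn_ends V F" and y: "y \<in> cn_ends V F" and e: "G x = G y"
      obtain N where N: "necklace V F N" "x = cls N" using x unfolding ends by blast
      obtain M where M: "necklace V F M" "y = cls M" using y unfolding ends by blast
      have "dir2 V E N = dir2 V E M" using e Gcls N M by simp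
      then show "x = y" using clsEq[OF N(1) M(1)] N M by simp
    qed
    show "G ` cn_ends V F = \<Delta>" unfolding ends \<Delta>_def image_image using Gcls by auto
  qed
  define B1 where "B1 = {{\<omega> \<in> cn_ends V F. cn_end_comp V F A \<omega> = K} | A K.
             finite A \<and> A \<subseteq> V \<and> K \<in> cn_components V F (V - A)}"
  define B2 where "B2 = {{d \<in> \<Delta>. d A = K} | A K. finite A \<and> A \<subseteq> V \<and> K \<in> strong_components V E A}"
  have imgeq: "G ` {\<omega> \<in> cn_ends V F. cn_end_comp V F A \<omega> = K} = {d \<in> \<Delta>. d A = K}"
    if A: "finite A" "A \<subseteq> V" for A K
  proof
    show "G ` {\<omega> \<in> cn_ends V F. cn_end_comp V F A \<omega> = K} \<subseteq> {d \<in> \<Delta>. d A = K}"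
    proof
      fix d assume "d \<in> G ` {\<omega> \<in> cn_ends V F. cn_end_comp V F A \<omega> = K}"
      then obtain \<omega> where w: "\<omega> \<in> cn_ends V F" "cn_end_comp V F A \<omega> = K" "d = G \<omega>" by blast
      obtain N where N: "necklace V F N" "\<omega> = cls N" using w(1) unfolding ends by blast
      have "d = dir2 V E N" using w(3) N Gcls by simp
      moreover have "dir2 V E N A = K" using w(2) N comp[OF N(1) A] by simp
      ultimately show "d \<in> {d \<in> \<Delta>. d A = K}" unfolding \<Delta>_def using N(1) by blast
    qed
    show "{d \<in> \<Delta>. d A = K} \<subseteq> G ` {\<omega> \<in> cn_ends V F. cn_end_comp V F A \<omega> = K}"
    proof
      fix d assume "d \<in> {d \<in> \<Delta>. d A = K}"
      then obtain N where N: "necklace V F N" "d = dir2 V E N" "d A = K" unfolding \<Delta>_def by blast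
      have "cls N \<in> cn_ends V F" unfolding ends using N(1) by blast
      moreover have "cn_end_comp V F A (cls N) = K" using comp[OF N(1) A] N by simp
      moreover have "G (cls N) = d" using Gcls[OF N(1)] N(2) by simp
      ultimately show "d \<in> G ` {\<omega> \<in> cn_ends V F. cn_end_comp V F A \<omega> = K}" by blast
    qed
  qed
  have ccs: "K \<in> cn_components V F (V - A) \<longleftrightarrow> K \<in> strong_components V E A" if "finite A" for A K
    unfolding F_def cnc_sc[OF Vinf that] ..
  have B2eq: "B2 = (\<lambda>b. G ` b) ` B1"
  proof
    show "B2 \<subseteq> (\<lambda>b. G ` b) ` B1"
    proof
      fix x assume "x \<in> B2"
      then obtain A K where AK: "x = {d \<in> \<Delta>. d A = K}" "finite A" "A \<subseteq> V" "K \<in> strong_components V E A"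
        unfolding B2_def by blast
      then have "x = G ` {\<omega> \<in> cn_ends V F. cn_end_comp V F A \<omega> = K}" using imgeq by simp
      moreover have "K \<in> cn_components V F (V - A)" using ccs[OF AK(2)] AK(4) by simp
      then have "{\<omega> \<in> cn_ends V F. cn_end_comp V F A \<omega> = K} \<in> B1" unfolding B1_def using AK by blast
      ultimately show "x \<in> (\<lambda>b. G ` b) ` B1" by blast
    qed
    show "(\<lambda>b. G ` b) ` B1 \<subseteq> B2"
    proof
      fix x assume "x \<in> (\<lambda>b. G ` b) ` B1"
      then obtain A K where AK: "x = G ` {\<omega> \<in> cn_ends V F. cn_end_comp V F A \<omega> = K}" "finite A" "A \<subseteq> V"
          "K \<in> cn_components V F (V - A)"
        unfolding B1_def by blast
      then have "x = {d \<in> \<Delta>. d A = K}" using imgeq by simp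
      moreover have "K \<in> strong_components V E A" using ccs[OF AK(2)] AK(4) by simp
      ultimately show "x \<in> B2" unfolding B2_def using AK by blast
    qed
  qed
  have B1sub: "\<forall>b\<in>B1. b \<subseteq> cn_ends V F" unfolding B1_def by blast
  have cov: "cn_ends V F \<subseteq> \<Union>B1"
  proof
    fix \<omega> assume w: "\<omega> \<in> cn_ends V F"
    obtain N where N: "necklace V F N" "\<omega> = cls N" using w unfolding ends by blast
    have f: "finite ({} :: 'a set)" "{} \<subseteq> V" by auto
    have "dir2 V E N {} \<in> strong_components V E {}" using dir2_prop[OF N(1)[unfolded F_def] f] by blast
    then have K: "dir2 V E N {} \<in> cn_components V F (V - {})" using ccs[OF f(1)] by simp
    have c: "cn_end_comp V F {} \<omega> = dir2 V E N {}" using comp[OF N(1) f] N(2) by simp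
    have "{\<omega>' \<in> cn_ends V F. cn_end_comp V F {} \<omega>' = dir2 V E N {}} \<in> B1"
      unfolding B1_def using f K by blast
    moreover have "\<omega> \<in> {\<omega>' \<in> cn_ends V F. cn_end_comp V F {} \<omega>' = dir2 V E N {}}"
      using w c by blast
    ultimately show "\<omega> \<in> \<Union>B1" by blast
  qed
  have "subtopology (topology_generated_by B1) (cn_ends V F) homeomorphic_space
         subtopology (topology_generated_by B2) \<Delta>"
    by (rule gen_homeo[OF bij B1sub cov B2eq])
  then show ?thesis unfolding cn_end_space_def B1_def B2_def \<Delta>_def F_def .
qed

lemma inj_tail:
  assumes "inj r" "\<forall>t. r t \<in> N" "finite (N - K)"
  shows "tail_in r K"
proof -
  have "{t. r t \<notin> K} \<subseteq> r -` (N - K)" using assms(2) by blast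
  moreover have "finite (r -` (N - K))" using finite_vimageI[OF assms(3) assms(1)] .
  ultimately have "finite {t. r t \<notin> K}" using finite_subset by blast
  then obtain n0 where "\<forall>n\<ge>n0. n \<notin> {t. r t \<notin> K}" using fin_nat_bound by blast
  then show ?thesis unfolding tail_in_def by blast
qed

lemma Deq:
  "dir1 V E ` {r. solid_ray V E r} = dir2 V E ` {N. necklace V (digraph_connectoid_family V E) N}"
proof
  show "dir1 V E ` {r. solid_ray V E r} \<subseteq> dir2 V E ` {N. necklace V (digraph_connectoid_family V E) N}"
  proof
    fix d assume "d \<in> dir1 V E ` {r. solid_ray V E r}"
    then obtain r where r: "solid_ray V E r" "d = dir1 V E r" by blast
    obtain N where N: "necklace V (digraph_connectoid_family V E) N"
      "\<forall>A K. finite A \<and> A \<subseteq> V \<and> K \<in> strong_components V E A \<and> tail_in r K \<longrightarrow> finite (N - K)"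
      using ray_to_neck[OF r(1)] by blast
    have "dir2 V E N = dir1 V E r"
    proof
      fix A show "dir2 V E N A = dir1 V E r A"
      proof (cases "finite A \<and> A \<subseteq> V")
        case True
        then have P: "dir1 V E r A \<in> strong_components V E A" "tail_in r (dir1 V E r A)"
          using dir1_prop[OF r(1)] by auto
        then have "finite (N - dir1 V E r A)" using N(2) True by blast
        then show ?thesis using dir2_eq[OF N(1) _ _ P(1)] True by blast
      next
        case False then show ?thesis unfolding dir1_def dir2_def by (simp only: if_False)
      qed
    qed
    then have "d = dir2 V E N" using r(2) by simp
    then show "d \<in> dir2 V E ` {N. necklace V (digraph_connectoid_family V E) N}" using N(1) by blast
  qed
  show "dir2 V E ` {N. necklace V (digraph_connectoid_family V E) N} \<subseteq> dir1 V E ` {r. solid_ray V E r}"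
  proof
    fix d assume "d \<in> dir2 V E ` {N. necklace V (digraph_connectoid_family V E) N}"
    then obtain N where N: "necklace V (digraph_connectoid_family V E) N" "d = dir2 V E N" by blast
    obtain r where r: "directed_ray V E r" "\<forall>t. r t \<in> N" using neck_to_ray[OF N(1)] by blast
    have ir: "inj r" using r(1) unfolding directed_ray_def by blast
    have tl: "tail_in r (dir2 V E N A)" if A: "finite A" "A \<subseteq> V" for A
      using inj_tail[OF ir r(2)] dir2_prop[OF N(1) A] by blast
    have sr: "solid_ray V E r" unfolding solid_ray_def
      using r(1) tl dir2_prop[OF N(1)] by blast
    have "dir1 V E r = dir2 V E N"
    proof
      fix A show "dir1 V E r A = dir2 V E N A"
      proof (cases "finite A \<and> A \<subseteq> V")
        case True
        then show ?thesis using dir1_eq[of A V "dir2 V E N A" E r] dir2_prop[OF N(1)] tl by blast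
      next
        case False then show ?thesis unfolding dir1_def dir2_def by (simp only: if_False)
      qed
    qed
    then have "d = dir1 V E r" using N(2) by simp
    then show "d \<in> dir1 V E ` {r. solid_ray V E r}" using sr by blast
  qed
qed

theorem lemma4p5:
  fixes V :: "'a set" and E :: "('a \<times> 'a) set"
  assumes "E \<subseteq> V \<times> V"
  shows "dg_end_space V E homeomorphic_space
           cn_end_space V (digraph_connectoid_family V E)"
proof (cases "finite V")
  case True
  have d: "dg_ends V E = {}"
  proof -
    have "\<not> solid_ray V E r" for r
    proof
      assume "solid_ray V E r"
      then have "inj r" "range r \<subseteq> V" unfolding solid_ray_def directed_ray_def by auto
      then show False using range_inj_infinite True finite_subset by blast
    qed
    then show ?thesis unfolding dg_ends_def by blast
  qed
  have c: "cn_ends V (digraph_connectoid_family V E) = {}"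
    unfolding cn_ends_def using V_inf_neck True by blast
  have "dg_end_space V E = trivial_topology" unfolding dg_end_space_def d by simp
  moreover have "cn_end_space V (digraph_connectoid_family V E) = trivial_topology"
    unfolding cn_end_space_def c by simp
  ultimately show ?thesis using homeomorphic_empty_space_eq by metis
next
  case False
  note a = dg_side[of V E] and b = cn_side[OF False, of E]
  show ?thesis
    using homeomorphic_space_trans[OF a homeomorphic_space_sym[THEN iffD1, OF b[unfolded Deq[symmetric]]]] .
qed

end
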